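(* Assume that (H1)-(H2) hold, $\widetilde{\mathcal{L}}$ is compact and $k_{w}(x,\cdot)\in L^2(pw)$ for a certain $x\in ]a,b[$. For all $g_0=\sum_{i=1}^{\infty}a_i e_i\in E^2(p,w)$ with $a_1=\mathbb{E}_p[g_0 e_1w]\neq 0$, we have \begin{equation*} \left|\frac{\widetilde{\mathcal{L}} ^{n+1} g_0}{\widetilde{\mathcal{L}} ^n g_0}(x)-C(p,w)\right|\leq 2\left(\frac{|a_1e_1(x)|}{B_n(x)}-\frac{1}{C(p,w)}\right)^{-1} \end{equation*} for all $n\in\mathbb{N}$ such that $B_n(x)< C(p,w)|a_1e_1(x)|$, where \begin{equation*} B_n(x):=\left\|k_w(x,\cdot)\right\|_{L^2(pw)}\left\|g_0-a_1e_1\right\|_{L^2(pw)}\left(\frac{\kappa_2}{C(p,w)}\right)^{n-1}. \end{equation*}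
   Context: Let $-\infty\le a<b\le\infty$, $p$ a probability density on $]a,b[$ with $p>0$ a.e., $w\in L^1_{\text{loc}}(]a,b[)$ a weight with $w>0$ a.e. and $pw\in L^1_{\text{loc}}$. Let $P(x)=\int_a^x p$, $\bar P=1-P$, $K(x,y)=P(x\wedge y)\bar P(x\vee y)$, $k(x,y)=K(x,y)/(p(x)p(y))$, $k_w(x,y)=k(x,y)/(w(x)w(y))$. $C(p,w)$ is the smallest $C$ with $\mathrm{Var}_p[h]\le C\,\mathbb{E}_p[|h'|^2w]$ for all weakly differentiable $h\in L^2(p)$ with $h'\in L^2(pw)$. Hypotheses: (H1) $C(p,w)<\infty$; (H2) $L^2(pw)\subset L^1_{\text{loc}}(]a,b[)$. $E^2(p,w)=\{f\in L^2(pw)\cap L^1_{\text{loc}}: x\mapsto\int_{x_0}^x f\in L^2(p)\}$ with $L^2(pw)$ norm. $\widetilde{\mathcal{L}} f(x)=\frac{1}{p(x)w(x)}\int_a^b K(x,y)f(y)\,dy$ with iterates $\widetilde{\mathcal{L}}^{n+1}=\widetilde{\mathcal{L}}(\widetilde{\mathcal{L}}^n)$. When compact, its eigenvalues $\kappa_1\ge\kappa_2\ge\dots>0$ tend to $0$, $\kappa_1=C(p,w)$, with orthonormal eigenbasis $\{e_i\}$ of $E^2(p,w)$ and $a_i=\mathbb{E}_p[g_0e_iw]$. *)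

theory Defs
  imports "HOL-Analysis.Analysis"
begin

definition locint :: "ereal \<Rightarrow> ereal \<Rightarrow> (real \<Rightarrow> real) \<Rightarrow> bool" where
  "locint a b f \<longleftrightarrow> (\<forall>c d. c \<in> einterval a b \<longrightarrow> d \<in> einterval a b \<longrightarrow>
       set_integrable lborel {c..d} f)"

definition is_prob_density :: "ereal \<Rightarrow> ereal \<Rightarrow> (real \<Rightarrow> real) \<Rightarrow> bool" where
  "is_prob_density a b p \<longleftrightarrow> a < b \<and> p \<in> borel_measurable borel \<and>
     set_integrable lborel (einterval a b) p \<and>
     (LINT x:einterval a b|lborel. p x) = 1 \<and>
     (AE x in lborel. x \<in> einterval a b \<longrightarrow> p x > 0)"

definition is_weight :: "ereal \<Rightarrow> ereal \<Rightarrow> (real \<Rightarrow> real) \<Rightarrow> (real \<Rightarrow> real) \<Rightarrow> bool" where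
  "is_weight a b p w \<longleftrightarrow> w \<in> borel_measurable borel \<and> locint a b w \<and>
     (AE x in lborel. x \<in> einterval a b \<longrightarrow> w x > 0) \<and> locint a b (\<lambda>x. p x * w x)"

definition L2p :: "ereal \<Rightarrow> ereal \<Rightarrow> (real \<Rightarrow> real) \<Rightarrow> (real \<Rightarrow> real) \<Rightarrow> bool" where
  "L2p a b p h \<longleftrightarrow> h \<in> borel_measurable borel \<and>
     set_integrable lborel (einterval a b) (\<lambda>x. (h x)\<^sup>2 * p x)"

definition L2pw :: "ereal \<Rightarrow> ereal \<Rightarrow> (real \<Rightarrow> real) \<Rightarrow> (real \<Rightarrow> real) \<Rightarrow> (real \<Rightarrow> real) \<Rightarrow> bool" where
  "L2pw a b p w f \<longleftrightarrow> f \<in> borel_measurable borel \<and>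
     set_integrable lborel (einterval a b) (\<lambda>x. (f x)\<^sup>2 * p x * w x)"

definition ipw :: "ereal \<Rightarrow> ereal \<Rightarrow> (real \<Rightarrow> real) \<Rightarrow> (real \<Rightarrow> real) \<Rightarrow> (real \<Rightarrow> real) \<Rightarrow> (real \<Rightarrow> real) \<Rightarrow> real" where
  "ipw a b p w f g = (LINT x:einterval a b|lborel. f x * g x * p x * w x)"

definition normpw :: "ereal \<Rightarrow> ereal \<Rightarrow> (real \<Rightarrow> real) \<Rightarrow> (real \<Rightarrow> real) \<Rightarrow> (real \<Rightarrow> real) \<Rightarrow> real" where
  "normpw a b p w f = sqrt (LINT x:einterval a b|lborel. (f x)\<^sup>2 * p x * w x)"

definition var_p :: "ereal \<Rightarrow> ereal \<Rightarrow> (real \<Rightarrow> real) \<Rightarrow> (real \<Rightarrow> real) \<Rightarrow> real" where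
  "var_p a b p h = (LINT x:einterval a b|lborel. (h x)\<^sup>2 * p x)
                   - (LINT x:einterval a b|lborel. h x * p x)\<^sup>2"

definition weak_deriv :: "ereal \<Rightarrow> ereal \<Rightarrow> (real \<Rightarrow> real) \<Rightarrow> (real \<Rightarrow> real) \<Rightarrow> bool" where
  "weak_deriv a b h h' \<longleftrightarrow> locint a b h \<and> locint a b h' \<and>
     (\<forall>\<phi> \<phi>'. (\<forall>x. (\<phi> has_real_derivative \<phi>' x) (at x)) \<and> continuous_on UNIV \<phi>' \<and>
        (\<exists>c d. c \<in> einterval a b \<and> d \<in> einterval a b \<and> (\<forall>x. x \<notin> {c..d} \<longrightarrow> \<phi> x = 0)) \<longrightarrow>
        (LINT x:einterval a b|lborel. h x * \<phi>' x) = - (LINT x:einterval a b|lborel. h' x * \<phi> x))"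

definition poincare_const :: "ereal \<Rightarrow> ereal \<Rightarrow> (real \<Rightarrow> real) \<Rightarrow> (real \<Rightarrow> real) \<Rightarrow> real \<Rightarrow> bool" where
  "poincare_const a b p w C \<longleftrightarrow>
     (\<forall>h h'. L2p a b p h \<and> weak_deriv a b h h' \<and> L2pw a b p w h' \<longrightarrow>
        var_p a b p h \<le> C * (LINT x:einterval a b|lborel. (h' x)\<^sup>2 * p x * w x))"

definition Cpw :: "ereal \<Rightarrow> ereal \<Rightarrow> (real \<Rightarrow> real) \<Rightarrow> (real \<Rightarrow> real) \<Rightarrow> real" where
  "Cpw a b p w = Inf {C. poincare_const a b p w C}"

definition H1 :: "ereal \<Rightarrow> ereal \<Rightarrow> (real \<Rightarrow> real) \<Rightarrow> (real \<Rightarrow> real) \<Rightarrow> bool" where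
  "H1 a b p w \<longleftrightarrow> (\<exists>C. poincare_const a b p w C)"

definition H2 :: "ereal \<Rightarrow> ereal \<Rightarrow> (real \<Rightarrow> real) \<Rightarrow> (real \<Rightarrow> real) \<Rightarrow> bool" where
  "H2 a b p w \<longleftrightarrow> (\<forall>f. L2pw a b p w f \<longrightarrow> locint a b f)"

definition Pcdf :: "ereal \<Rightarrow> (real \<Rightarrow> real) \<Rightarrow> real \<Rightarrow> real" where
  "Pcdf a p x = interval_lebesgue_integral lborel a (ereal x) p"

definition Kker :: "ereal \<Rightarrow> (real \<Rightarrow> real) \<Rightarrow> real \<Rightarrow> real \<Rightarrow> real" where
  "Kker a p x y = Pcdf a p (min x y) * (1 - Pcdf a p (max x y))"

definition kw :: "ereal \<Rightarrow> (real \<Rightarrow> real) \<Rightarrow> (real \<Rightarrow> real) \<Rightarrow> real \<Rightarrow> real \<Rightarrow> real" where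
  "kw a p w x y = Kker a p x y / (p x * p y) / (w x * w y)"

definition E2 :: "ereal \<Rightarrow> ereal \<Rightarrow> (real \<Rightarrow> real) \<Rightarrow> (real \<Rightarrow> real) \<Rightarrow> (real \<Rightarrow> real) \<Rightarrow> bool" where
  "E2 a b p w f \<longleftrightarrow> L2pw a b p w f \<and> locint a b f \<and>
     (\<exists>x0 \<in> einterval a b. L2p a b p (\<lambda>x. LBINT t=ereal x0..ereal x. f t))"

definition Lt :: "ereal \<Rightarrow> ereal \<Rightarrow> (real \<Rightarrow> real) \<Rightarrow> (real \<Rightarrow> real) \<Rightarrow> (real \<Rightarrow> real) \<Rightarrow> real \<Rightarrow> real" where
  "Lt a b p w f x = (1 / (p x * w x)) * (LINT y:einterval a b|lborel. Kker a p x y * f y)"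

definition Lt_compact :: "ereal \<Rightarrow> ereal \<Rightarrow> (real \<Rightarrow> real) \<Rightarrow> (real \<Rightarrow> real) \<Rightarrow> bool" where
  "Lt_compact a b p w \<longleftrightarrow>
     (\<forall>f. E2 a b p w f \<longrightarrow> E2 a b p w (Lt a b p w f)) \<and>
     (\<forall>F::nat \<Rightarrow> real \<Rightarrow> real. (\<forall>n. E2 a b p w (F n)) \<and> bounded (range (\<lambda>n. normpw a b p w (F n))) \<longrightarrow>
        (\<exists>r g. strict_mono r \<and> E2 a b p w g \<and>
           (\<lambda>n. normpw a b p w (\<lambda>x. Lt a b p w (F (r n)) x - g x)) \<longlonglongrightarrow> 0))"

text \<open>The eigenfunctions are the
  representatives satisfying the eigen-equation pointwise on ]a,b[.\<close>
definition eigensystem :: "ereal \<Rightarrow> ereal \<Rightarrow> (real \<Rightarrow> real) \<Rightarrow> (real \<Rightarrow> real) \<Rightarrow>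
     (nat \<Rightarrow> real) \<Rightarrow> (nat \<Rightarrow> real \<Rightarrow> real) \<Rightarrow> bool" where
  "eigensystem a b p w \<kappa> e \<longleftrightarrow>
     (\<forall>i\<ge>1. E2 a b p w (e i)) \<and>
     (\<forall>i\<ge>1. \<forall>j\<ge>1. ipw a b p w (e i) (e j) = (if i = j then 1 else 0)) \<and>
     (\<forall>g. E2 a b p w g \<longrightarrow>
        (\<lambda>N. normpw a b p w (\<lambda>x. g x - (\<Sum>i=1..N. ipw a b p w g (e i) * e i x))) \<longlonglongrightarrow> 0) \<and>
     (\<forall>i\<ge>1. \<forall>x \<in> einterval a b. Lt a b p w (e i) x = \<kappa> i * e i x) \<and>
     (\<forall>i\<ge>1. \<kappa> i > 0) \<and> (\<forall>i\<ge>1. \<kappa> (Suc i) \<le> \<kappa> i) \<and> \<kappa> \<longlonglongrightarrow> 0 \<and>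
     \<kappa> 1 = Cpw a b p w"

end

theory Submission
  imports Defs "HOL-Analysis.Analysis"
begin

lemma final_alg:
  fixes \<alpha> r s C k2 Nk Nh B :: real and n :: nat
  assumes C: "C > 0" and n: "n \<ge> 1" and B: "B = Nk * Nh * (k2 / C) ^ (n - 1)"
    and Nk: "Nk \<ge> 0" and Nh: "Nh \<ge> 0" and k2: "0 < k2" "k2 \<le> C"
    and r: "\<bar>r\<bar> \<le> Nk * Nh * k2 ^ (n - 1)" and s: "\<bar>s\<bar> \<le> Nk * Nh * k2 ^ n"
    and hyp: "B < C * \<bar>\<alpha>\<bar>"
  shows "\<bar>(\<alpha> * C ^ (n + 1) + s) / (\<alpha> * C ^ n + r) - C\<bar>
     \<le> (if B = 0 then 0 else 2 * inverse (\<bar>\<alpha>\<bar> / B - 1 / C))"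
proof -
  define D where "D = C ^ (n - 1)"
  have D: "D > 0" using C unfolding D_def by simp
  have Cn: "C ^ n = C * D" unfolding D_def using n by (cases n) auto
  have Cn1: "C ^ (n + 1) = C * C * D" using Cn by simp
  have BD: "Nk * Nh * k2 ^ (n - 1) = B * D"
    unfolding B D_def using C by (simp add: power_divide)
  have B0: "B \<ge> 0" unfolding B using Nk Nh k2 C by simp
  have kn: "k2 ^ n = k2 * k2 ^ (n - 1)" using n by (cases n) auto
  have s': "\<bar>s\<bar> \<le> B * D * C"
  proof -
    have "Nk * Nh * k2 ^ n = (Nk * Nh * k2 ^ (n - 1)) * k2" using kn by (simp add: ac_simps)
    also have "\<dots> \<le> (Nk * Nh * k2 ^ (n - 1)) * C"
      using k2 Nk Nh by (intro mult_left_mono) auto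
    finally show ?thesis using s BD by simp
  qed
  have r': "\<bar>r\<bar> \<le> B * D" using r BD by simp
  have al: "B < C * \<bar>\<alpha>\<bar>" by (rule hyp)
  have Tpos: "\<bar>\<alpha> * C ^ n + r\<bar> \<ge> \<bar>\<alpha>\<bar> * C * D - B * D"
  proof -
    have "\<bar>\<alpha> * C ^ n\<bar> = \<bar>\<alpha>\<bar> * C * D" using Cn C D by (simp add: abs_mult)
    then show ?thesis using r' by linarith
  qed
  have gap: "\<bar>\<alpha>\<bar> * C * D - B * D > 0"
  proof -
    have "B * D < (C * \<bar>\<alpha>\<bar>) * D" using al D by simp
    then show ?thesis by (simp add: ac_simps)
  qed
  have Tne: "\<alpha> * C ^ n + r \<noteq> 0" using Tpos gap by auto
  have num: "(\<alpha> * C ^ (n + 1) + s) / (\<alpha> * C ^ n + r) - C = (s - C * r) / (\<alpha> * C ^ n + r)"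
    using Tne Cn Cn1 by (simp add: field_simps)
  have numb: "\<bar>s - C * r\<bar> \<le> 2 * B * C * D"
  proof -
    have "\<bar>C * r\<bar> \<le> C * (B * D)" using r' C by (simp add: abs_mult)
    then show ?thesis using s' by (simp add: abs_triangle_ineq4 algebra_simps)
  qed
  have main: "\<bar>(s - C * r) / (\<alpha> * C ^ n + r)\<bar> \<le> 2 * B * C * D / (\<bar>\<alpha>\<bar> * C * D - B * D)"
  proof -
    have "\<bar>(s - C * r) / (\<alpha> * C ^ n + r)\<bar> = \<bar>s - C * r\<bar> / \<bar>\<alpha> * C ^ n + r\<bar>" by (simp add: abs_divide)
    also have "\<dots> \<le> 2 * B * C * D / \<bar>\<alpha> * C ^ n + r\<bar>"
      using numb Tne by (intro divide_right_mono) auto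
    also have "\<dots> \<le> 2 * B * C * D / (\<bar>\<alpha>\<bar> * C * D - B * D)"
    proof (rule divide_left_mono)
      show "0 \<le> 2 * B * C * D" using B0 C D by simp
      show "\<bar>\<alpha>\<bar> * C * D - B * D \<le> \<bar>\<alpha> * C ^ n + r\<bar>" by (rule Tpos)
      show "0 < \<bar>\<alpha> * C ^ n + r\<bar> * (\<bar>\<alpha>\<bar> * C * D - B * D)"
        using Tpos gap by (intro mult_pos_pos) auto
    qed
    finally show ?thesis .
  qed
  show ?thesis
  proof (cases "B = 0")
    case True
    then have "s - C * r = 0" using numb C D by simp
    then show ?thesis using num True by simp
  next
    case False
    then have Bp: "B > 0" using B0 by simp
    have "2 * B * C * D / (\<bar>\<alpha>\<bar> * C * D - B * D) = 2 * inverse (\<bar>\<alpha>\<bar> / B - 1 / C)"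
      using Bp C D gap by (simp add: field_simps)
    then show ?thesis using main num False by simp
  qed
qed

locale S =
  fixes a b :: ereal and p w :: "real \<Rightarrow> real"
  assumes dens: "is_prob_density a b p"
    and weight: "is_weight a b p w"
begin

abbreviation "I \<equiv> einterval a b"

lemma ab: "a < b" using dens unfolding is_prob_density_def by auto
lemma p_meas[measurable]: "p \<in> borel_measurable borel" using dens unfolding is_prob_density_def by auto
lemma w_meas[measurable]: "w \<in> borel_measurable borel" using weight unfolding is_weight_def by auto
lemma p_int: "set_integrable lborel I p" using dens unfolding is_prob_density_def by auto
lemma p_one: "(LINT x:I|lborel. p x) = 1" using dens unfolding is_prob_density_def by auto
lemma p_pos: "AE x in lborel. x \<in> I \<longrightarrow> p x > 0" using dens unfolding is_prob_density_def by auto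
lemma w_pos: "AE x in lborel. x \<in> I \<longrightarrow> w x > 0" using weight unfolding is_weight_def by auto
lemma pw_pos: "AE x in lborel. x \<in> I \<longrightarrow> p x * w x > 0"
  using p_pos w_pos by eventually_elim auto
lemma pw_nn: "AE x in lborel. x \<in> I \<longrightarrow> p x * w x \<ge> 0"
  using pw_pos by eventually_elim auto

lemma L2pw_meas: "L2pw a b p w f \<Longrightarrow> f \<in> borel_measurable borel"
  unfolding L2pw_def by auto

lemma L2pw_int: "L2pw a b p w f \<Longrightarrow> integrable lborel (\<lambda>y. indicator I y * ((f y)\<^sup>2 * p y * w y))"
  unfolding L2pw_def set_integrable_def by auto

lemma prod_int:
  assumes f: "L2pw a b p w f" and g: "L2pw a b p w g"
  shows "integrable lborel (\<lambda>y. indicator I y * (f y * g y * p y * w y))"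
proof (rule Bochner_Integration.integrable_bound)
  show "integrable lborel (\<lambda>y. indicator I y * ((f y)\<^sup>2 * p y * w y) + indicator I y * ((g y)\<^sup>2 * p y * w y))"
    using L2pw_int[OF f] L2pw_int[OF g] by auto
  show "(\<lambda>y. indicator I y * (f y * g y * p y * w y)) \<in> borel_measurable lborel"
    using L2pw_meas[OF f] L2pw_meas[OF g] by measurable
  show "AE x in lborel. norm (indicator I x * (f x * g x * p x * w x))
     \<le> norm (indicator I x * ((f x)\<^sup>2 * p x * w x) + indicator I x * ((g x)\<^sup>2 * p x * w x))"
    using pw_nn
  proof eventually_elim
    case (elim x)
    show ?case
    proof (cases "x \<in> I")
      case True
      then have q: "p x * w x \<ge> 0" using elim by auto
      have "\<bar>f x * g x\<bar> \<le> (f x)\<^sup>2 + (g x)\<^sup>2"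
      proof -
        have "0 \<le> (\<bar>f x\<bar> - \<bar>g x\<bar>)^2" by simp
        then have "2 * (\<bar>f x\<bar> * \<bar>g x\<bar>) \<le> (f x)\<^sup>2 + (g x)\<^sup>2"
          by (simp add: power2_eq_square algebra_simps abs_mult)
        moreover have "0 \<le> \<bar>f x\<bar> * \<bar>g x\<bar>" by simp
        ultimately have "\<bar>f x\<bar> * \<bar>g x\<bar> \<le> (f x)\<^sup>2 + (g x)\<^sup>2" by linarith
        then show ?thesis by (simp add: abs_mult)
      qed
      then have "\<bar>f x * g x\<bar> * (p x * w x) \<le> ((f x)\<^sup>2 + (g x)\<^sup>2) * (p x * w x)"
        using q by (rule mult_right_mono)
      moreover have "\<bar>f x * g x * p x * w x\<bar> = \<bar>f x * g x\<bar> * (p x * w x)"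
      proof -
        have "\<bar>f x * g x * p x * w x\<bar> = \<bar>(f x * g x) * (p x * w x)\<bar>" by (simp add: mult.assoc)
        also have "\<dots> = \<bar>f x * g x\<bar> * (p x * w x)" by (simp only: abs_mult[of "f x * g x" "p x * w x"] abs_of_nonneg[OF q])
        finally show ?thesis .
      qed
      moreover have "(f x)\<^sup>2 * p x * w x + (g x)\<^sup>2 * p x * w x = ((f x)\<^sup>2 + (g x)\<^sup>2) * (p x * w x)"
        by (simp add: algebra_simps)
      moreover have "0 \<le> ((f x)\<^sup>2 + (g x)\<^sup>2) * (p x * w x)" using q by simp
      ultimately show ?thesis using True by (simp del: abs_mult)
    qed simp
  qed
qed

lemma ipw_alt: "ipw a b p w f g = integral\<^sup>L lborel (\<lambda>y. indicator I y * (f y * g y * p y * w y))"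
  unfolding ipw_def set_lebesgue_integral_def by simp

lemma normpw_alt: "normpw a b p w f = sqrt (ipw a b p w f f)"
  unfolding normpw_def ipw_def by (simp add: power2_eq_square mult.assoc)

lemma ipw_sym: "ipw a b p w f g = ipw a b p w g f"
  unfolding ipw_def by (simp add: mult.commute mult.left_commute)

lemma sq_nn: "(q::real) \<ge> 0 \<Longrightarrow> 0 \<le> f * (f * q)"
  by (metis mult.assoc mult_nonneg_nonneg zero_le_square)

lemma ipw_self_nn: "ipw a b p w f f \<ge> 0"
  unfolding ipw_alt
  by (rule integral_nonneg_AE) (use pw_nn in \<open>eventually_elim, auto simp: indicator_def mult.assoc intro!: sq_nn\<close>)

lemma normpw_nn: "normpw a b p w f \<ge> 0"
  unfolding normpw_alt using ipw_self_nn by simp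

lemma normpw_sq: "(normpw a b p w f)\<^sup>2 = ipw a b p w f f"
  unfolding normpw_alt using ipw_self_nn by simp

lemma ipw_scale_right: "ipw a b p w f (\<lambda>y. c * g y) = c * ipw a b p w f g"
  unfolding ipw_alt by (simp add: algebra_simps)

lemma ipw_scale_left: "ipw a b p w (\<lambda>y. c * f y) g = c * ipw a b p w f g"
  unfolding ipw_alt by (simp add: algebra_simps)

lemma ipw_add_right:
  assumes "L2pw a b p w f" "L2pw a b p w g" "L2pw a b p w h"
  shows "ipw a b p w f (\<lambda>y. g y + h y) = ipw a b p w f g + ipw a b p w f h"
proof -
  have "ipw a b p w f (\<lambda>y. g y + h y) = integral\<^sup>L lborel (\<lambda>y. indicator I y * (f y * g y * p y * w y)
      + indicator I y * (f y * h y * p y * w y))"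
    unfolding ipw_alt by (simp add: algebra_simps)
  also have "\<dots> = ipw a b p w f g + ipw a b p w f h"
    unfolding ipw_alt using prod_int assms by (intro Bochner_Integration.integral_add) auto
  finally show ?thesis .
qed

lemma ipw_diff_right:
  assumes "L2pw a b p w f" "L2pw a b p w g" "L2pw a b p w h"
  shows "ipw a b p w f (\<lambda>y. g y - h y) = ipw a b p w f g - ipw a b p w f h"
proof -
  have "ipw a b p w f (\<lambda>y. g y - h y) = integral\<^sup>L lborel (\<lambda>y. indicator I y * (f y * g y * p y * w y)
      - indicator I y * (f y * h y * p y * w y))"
    unfolding ipw_alt by (simp add: algebra_simps)
  also have "\<dots> = ipw a b p w f g - ipw a b p w f h"
    unfolding ipw_alt using prod_int assms by (intro Bochner_Integration.integral_diff) auto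
  finally show ?thesis .
qed

lemma L2pw_zero: "L2pw a b p w (\<lambda>y. 0)"
  unfolding L2pw_def set_integrable_def by simp

lemma sq_expand: "(i::real) * ((c*x + d*y)\<^sup>2 * q * r) = c\<^sup>2*(i*(x\<^sup>2*q*r)) + 2*c*d*(i*(x*y*q*r)) + d\<^sup>2*(i*(y\<^sup>2*q*r))"
  by (simp add: power2_eq_square algebra_simps)

lemma L2pw_lin:
  assumes f: "L2pw a b p w f" and g: "L2pw a b p w g"
  shows "L2pw a b p w (\<lambda>y. c * f y + d * g y)"
proof -
  have "integrable lborel (\<lambda>y. c\<^sup>2 * (indicator I y * ((f y)\<^sup>2 * p y * w y))
     + 2 * c * d * (indicator I y * (f y * g y * p y * w y))
     + d\<^sup>2 * (indicator I y * ((g y)\<^sup>2 * p y * w y)))"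
    using L2pw_int[OF f] L2pw_int[OF g] prod_int[OF f g] by auto
  then have "integrable lborel (\<lambda>y. indicator I y * ((c * f y + d * g y)\<^sup>2 * p y * w y))"
    by (simp add: sq_expand)
  then show ?thesis using L2pw_meas[OF f] L2pw_meas[OF g]
    unfolding L2pw_def set_integrable_def by auto
qed

lemma L2pw_sum:
  assumes "finite A" "\<And>i. i \<in> A \<Longrightarrow> L2pw a b p w (e i)"
  shows "L2pw a b p w (\<lambda>y. \<Sum>i\<in>A. c i * e i y)"
  using assms
proof (induction A rule: finite_induct)
  case empty then show ?case using L2pw_zero by simp
next
  case (insert j A)
  have "L2pw a b p w (\<lambda>y. c j * e j y + 1 * (\<Sum>i\<in>A. c i * e i y))"
    using insert by (intro L2pw_lin) auto
  then show ?case using insert by simp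
qed

lemma ipw_sum_right:
  assumes "finite A" "L2pw a b p w f" "\<And>i. i \<in> A \<Longrightarrow> L2pw a b p w (e i)"
  shows "ipw a b p w f (\<lambda>y. \<Sum>i\<in>A. c i * e i y) = (\<Sum>i\<in>A. c i * ipw a b p w f (e i))"
  using assms
proof (induction A rule: finite_induct)
  case empty then show ?case unfolding ipw_alt by simp
next
  case (insert j A)
  have "ipw a b p w f (\<lambda>y. \<Sum>i\<in>insert j A. c i * e i y)
      = ipw a b p w f (\<lambda>y. c j * e j y + (\<Sum>i\<in>A. c i * e i y))"
    using insert by simp
  also have "\<dots> = ipw a b p w f (\<lambda>y. c j * e j y) + ipw a b p w f (\<lambda>y. \<Sum>i\<in>A. c i * e i y)"
    using insert L2pw_lin[of "e j" "e j" "c j" 0] L2pw_sum[of A e c]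
    by (intro ipw_add_right) auto
  also have "\<dots> = (\<Sum>i\<in>insert j A. c i * ipw a b p w f (e i))"
    using insert by (simp add: ipw_scale_right)
  finally show ?case .
qed

lemma quad_discr:
  fixes A B C :: real
  assumes "\<And>t. 0 \<le> A - 2 * t * B + t\<^sup>2 * C" "C \<ge> 0"
  shows "B\<^sup>2 \<le> A * C"
proof (cases "C = 0")
  case True
  have "B = 0"
  proof (rule ccontr)
    assume "B \<noteq> 0"
    have "0 \<le> A - 2 * ((A + 1) / (2 * B)) * B" using assms(1)[of "(A + 1) / (2 * B)"] True by simp
    also have "\<dots> = -1" using \<open>B \<noteq> 0\<close> by (simp add: field_simps)
    finally show False by simp
  qed
  then show ?thesis using True by simp
next
  case False
  then have C: "C > 0" using assms(2) by simp
  have "0 \<le> A - 2 * (B / C) * B + (B / C)\<^sup>2 * C" by (rule assms(1))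
  also have "\<dots> = (A * C - B\<^sup>2) / C" using C by (simp add: field_simps power2_eq_square)
  finally show ?thesis using C by (simp add: divide_nonneg_pos zero_le_divide_iff)
qed

lemma cauchy_schwarz:
  assumes f: "L2pw a b p w f" and g: "L2pw a b p w g"
  shows "\<bar>ipw a b p w f g\<bar> \<le> normpw a b p w f * normpw a b p w g"
proof -
  have "(ipw a b p w f g)\<^sup>2 \<le> ipw a b p w f f * ipw a b p w g g"
  proof (rule quad_discr)
    fix t
    define h where "h = (\<lambda>y. f y - t * g y)"
    have L: "L2pw a b p w h" using L2pw_lin[OF f g, of 1 "-t"] unfolding h_def by simp
    have tg: "L2pw a b p w (\<lambda>y. t * g y)" using L2pw_lin[OF g g, of t 0] by simp
    have "0 \<le> ipw a b p w h h" by (rule ipw_self_nn)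
    also have "ipw a b p w h h = ipw a b p w h f - t * ipw a b p w h g"
      using ipw_diff_right[OF L f tg] unfolding h_def by (simp add: ipw_scale_right)
    also have "ipw a b p w h f = ipw a b p w f f - t * ipw a b p w f g"
      using ipw_diff_right[OF f f tg] ipw_sym[of h f] unfolding h_def by (simp add: ipw_scale_right)
    also have "ipw a b p w h g = ipw a b p w f g - t * ipw a b p w g g"
      using ipw_diff_right[OF g f tg] ipw_sym[of h g] ipw_sym[of g f] unfolding h_def by (simp add: ipw_scale_right)
    finally show "0 \<le> ipw a b p w f f - 2 * t * ipw a b p w f g + t\<^sup>2 * ipw a b p w g g"
      by (simp add: algebra_simps power2_eq_square)
  qed (rule ipw_self_nn)
  then have "sqrt ((ipw a b p w f g)\<^sup>2) \<le> sqrt (ipw a b p w f f * ipw a b p w g g)"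
    by (rule real_sqrt_le_mono)
  then have "\<bar>ipw a b p w f g\<bar> \<le> sqrt (ipw a b p w f f * ipw a b p w g g)"
    by simp
  then show ?thesis unfolding normpw_alt by (simp add: real_sqrt_mult)
qed

end

context S begin

lemma P_meas[measurable]: "Pcdf a p \<in> borel_measurable borel"
proof -
  have m1: "(\<lambda>t. \<integral>s. indicator (einterval a (ereal t)) s * p s \<partial>lborel) \<in> borel_measurable borel"
  proof -
    have "(\<lambda>(t, s). indicator (einterval a (ereal t)) s * p s) \<in> borel_measurable (borel \<Otimes>\<^sub>M lborel)"
      unfolding einterval_def indicator_def by measurable
    then show ?thesis using lborel.borel_measurable_lebesgue_integral[of "\<lambda>t s. indicator (einterval a (ereal t)) s * p s" borel]
      by simp
  qed
  have m2: "(\<lambda>t. \<integral>s. indicator (einterval (ereal t) a) s * p s \<partial>lborel) \<in> borel_measurable borel"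
  proof -
    have "(\<lambda>(t, s). indicator (einterval (ereal t) a) s * p s) \<in> borel_measurable (borel \<Otimes>\<^sub>M lborel)"
      unfolding einterval_def indicator_def by measurable
    then show ?thesis using lborel.borel_measurable_lebesgue_integral[of "\<lambda>t s. indicator (einterval (ereal t) a) s * p s" borel]
      by simp
  qed
  have "Pcdf a p = (\<lambda>t. if a \<le> ereal t then (\<integral>s. indicator (einterval a (ereal t)) s * p s \<partial>lborel)
      else - (\<integral>s. indicator (einterval (ereal t) a) s * p s \<partial>lborel))"
    unfolding Pcdf_def interval_lebesgue_integral_def set_lebesgue_integral_def by (auto simp: fun_eq_iff)
  also have "\<dots> \<in> borel_measurable borel"
    using m1 m2 by measurable
  finally show ?thesis .
qed

lemma K_meas[measurable]: "(\<lambda>(y,z). Kker a p y z) \<in> borel_measurable (borel \<Otimes>\<^sub>M borel)"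
  unfolding Kker_def by measurable

lemma K_meas2[measurable]: "(\<lambda>(y,z). Kker a p y z) \<in> borel_measurable (lborel \<Otimes>\<^sub>M lborel)"
  using K_meas by (simp add: measurable_lborel2)

end

context S begin

lemma I_sub: "t \<in> I \<Longrightarrow> einterval a (ereal t) \<subseteq> I"
  by (auto simp: einterval_def) (meson less_ereal.simps(1) less_trans)

lemma P_I: "t \<in> I \<Longrightarrow> Pcdf a p t = (\<integral>s. indicator (einterval a (ereal t)) s * p s \<partial>lborel)"
  unfolding Pcdf_def interval_lebesgue_integral_def set_lebesgue_integral_def
  by (auto simp: einterval_def)

lemma P_nn: assumes t: "t \<in> I" shows "0 \<le> Pcdf a p t"
  unfolding P_I[OF t]
proof (rule integral_nonneg_AE)
  show "AE x in lborel. 0 \<le> indicator (einterval a (ereal t)) x * p x"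
    using p_pos by eventually_elim (use I_sub[OF t] in \<open>auto simp: indicator_def\<close>)
qed

lemma P_le1: assumes t: "t \<in> I" shows "Pcdf a p t \<le> 1"
proof -
  have i1: "integrable lborel (\<lambda>s. indicator (einterval a (ereal t)) s * p s)"
    using set_integrable_subset[OF p_int _ I_sub[OF t]] unfolding set_integrable_def by simp
  have i2: "integrable lborel (\<lambda>s. indicator I s * p s)"
    using p_int unfolding set_integrable_def by simp
  have "Pcdf a p t \<le> (\<integral>s. indicator I s * p s \<partial>lborel)"
    unfolding P_I[OF t]
  proof (rule integral_mono_AE[OF i1 i2])
    show "AE x in lborel. indicator (einterval a (ereal t)) x * p x \<le> indicator I x * p x"
      using p_pos by eventually_elim (use I_sub[OF t] in \<open>auto simp: indicator_def\<close>)
  qed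
  also have "\<dots> = 1" using p_one unfolding set_lebesgue_integral_def by simp
  finally show ?thesis .
qed

lemma min_I: "y \<in> I \<Longrightarrow> z \<in> I \<Longrightarrow> min y z \<in> I" by (simp add: min_def)
lemma max_I: "y \<in> I \<Longrightarrow> z \<in> I \<Longrightarrow> max y z \<in> I" by (simp add: max_def)

lemma K_nn: "y \<in> I \<Longrightarrow> z \<in> I \<Longrightarrow> 0 \<le> Kker a p y z"
  unfolding Kker_def using P_nn[OF min_I] P_le1[OF max_I] by simp

lemma K_sym: "Kker a p y z = Kker a p z y"
  unfolding Kker_def by (simp add: min.commute max.commute)

lemma Lt_ipw:
  assumes fm[measurable]: "f \<in> borel_measurable borel"
  shows "Lt a b p w f x = ipw a b p w (kw a p w x) f"
proof -
  have "ipw a b p w (kw a p w x) f = (\<integral>y. indicator I y * (kw a p w x y * f y * p y * w y) \<partial>lborel)"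
    by (rule ipw_alt)
  also have "\<dots> = (\<integral>y. 1 / (p x * w x) * (indicator I y * (Kker a p x y * f y)) \<partial>lborel)"
  proof (rule integral_cong_AE)
    show "AE y in lborel. indicator I y * (kw a p w x y * f y * p y * w y)
        = 1 / (p x * w x) * (indicator I y * (Kker a p x y * f y))"
      using p_pos w_pos
    proof eventually_elim
      case (elim y)
      show ?case
      proof (cases "y \<in> I")
        case True
        then have "p y > 0" "w y > 0" using elim by auto
        then show ?thesis using True
          by (cases "p x = 0 \<or> w x = 0") (auto simp: kw_def field_simps)
      qed simp
    qed
  qed (unfold kw_def, measurable)
  also have "\<dots> = Lt a b p w f x"
    unfolding Lt_def set_lebesgue_integral_def by simp
  finally show ?thesis by simp
qed

lemma Lt_pw:
  assumes "p y * w y \<noteq> 0"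
  shows "Lt a b p w f y * (p y * w y) = (\<integral>z. indicator I z * (Kker a p y z * f z) \<partial>lborel)"
  using assms unfolding Lt_def set_lebesgue_integral_def by simp

lemma Lt_sym:
  assumes f: "L2pw a b p w f" and e: "L2pw a b p w e"
    and key: "integrable (lborel \<Otimes>\<^sub>M lborel)
       (\<lambda>(y,z). indicator I y * indicator I z * Kker a p y z * (\<bar>e y\<bar> + \<bar>f y\<bar>) * (\<bar>e z\<bar> + \<bar>f z\<bar>))"
    and Ltm[measurable]: "Lt a b p w f \<in> borel_measurable borel"
    and eig: "\<And>z. z \<in> I \<Longrightarrow> Lt a b p w e z = \<kappa> * e z"
  shows "ipw a b p w (Lt a b p w f) e = \<kappa> * ipw a b p w f e"
proof -
  have fm[measurable]: "f \<in> borel_measurable borel" using L2pw_meas[OF f] .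
  have em[measurable]: "e \<in> borel_measurable borel" using L2pw_meas[OF e] .
  define F where "F y z = indicator I y * indicator I z * Kker a p y z * e y * f z" for y z
  have Fm[measurable]: "(\<lambda>(y,z). F y z) \<in> borel_measurable (lborel \<Otimes>\<^sub>M lborel)"
    unfolding F_def by measurable
  have int: "integrable (lborel \<Otimes>\<^sub>M lborel) (\<lambda>(y,z). F y z)"
  proof (rule Bochner_Integration.integrable_bound[OF key Fm])
    show "AE yz in lborel \<Otimes>\<^sub>M lborel. norm ((\<lambda>(y,z). F y z) yz) \<le>
      norm ((\<lambda>(y,z). indicator I y * indicator I z * Kker a p y z * (\<bar>e y\<bar> + \<bar>f y\<bar>) * (\<bar>e z\<bar> + \<bar>f z\<bar>)) yz)"
    proof (rule AE_I2, clarify)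
      fix y z
      show "norm (F y z) \<le> norm (indicator I y * indicator I z * Kker a p y z * (\<bar>e y\<bar> + \<bar>f y\<bar>) * (\<bar>e z\<bar> + \<bar>f z\<bar>))"
      proof (cases "y \<in> I \<and> z \<in> I")
        case True
        then have k: "Kker a p y z \<ge> 0" using K_nn by auto
        have "\<bar>e y\<bar> * \<bar>f z\<bar> \<le> (\<bar>e y\<bar> + \<bar>f y\<bar>) * (\<bar>e z\<bar> + \<bar>f z\<bar>)"
          by (intro mult_mono) auto
        then have "Kker a p y z * (\<bar>e y\<bar> * \<bar>f z\<bar>) \<le> Kker a p y z * ((\<bar>e y\<bar> + \<bar>f y\<bar>) * (\<bar>e z\<bar> + \<bar>f z\<bar>))"
          using k by (rule mult_left_mono)
        then show ?thesis using True k unfolding F_def by (simp add: abs_mult mult.assoc)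
      qed (auto simp: F_def)
    qed
  qed
  have fub: "(\<integral>z. (\<integral>y. F y z \<partial>lborel) \<partial>lborel) = (\<integral>y. (\<integral>z. F y z \<partial>lborel) \<partial>lborel)"
    using lborel_pair.Fubini_integral[OF int] .
  have L: "(\<integral>y. (\<integral>z. F y z \<partial>lborel) \<partial>lborel) = ipw a b p w (Lt a b p w f) e"
    unfolding ipw_alt
  proof (rule integral_cong_AE)
    show "AE y in lborel. (\<integral>z. F y z \<partial>lborel) = indicator I y * (Lt a b p w f y * e y * p y * w y)"
      using pw_pos
    proof eventually_elim
      case (elim y)
      have "(\<lambda>z. F y z) = (\<lambda>z. (indicator I y * e y) * (indicator I z * (Kker a p y z * f z)))"
        unfolding F_def by (auto simp: fun_eq_iff ac_simps)
      then have "(\<integral>z. F y z \<partial>lborel) = indicator I y * e y * (\<integral>z. indicator I z * (Kker a p y z * f z) \<partial>lborel)"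
        by (simp only: integral_mult_right_zero)
      also have "\<dots> = indicator I y * (Lt a b p w f y * e y * p y * w y)"
      proof (cases "y \<in> I")
        case True
        then have "p y * w y \<noteq> 0" using elim by auto
        then show ?thesis using Lt_pw[of y f] by (simp add: ac_simps)
      qed simp
      finally show ?case .
    qed
  qed measurable
  have R: "(\<integral>z. (\<integral>y. F y z \<partial>lborel) \<partial>lborel) = \<kappa> * ipw a b p w f e"
  proof -
    have "(\<integral>z. (\<integral>y. F y z \<partial>lborel) \<partial>lborel) = (\<integral>z. \<kappa> * (indicator I z * (f z * e z * p z * w z)) \<partial>lborel)"
    proof (rule integral_cong_AE)
      show "AE z in lborel. (\<integral>y. F y z \<partial>lborel) = \<kappa> * (indicator I z * (f z * e z * p z * w z))"
        using pw_pos
      proof eventually_elim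
        case (elim z)
        have "(\<lambda>y. F y z) = (\<lambda>y. (indicator I z * f z) * (indicator I y * (Kker a p z y * e y)))"
          unfolding F_def by (auto simp: fun_eq_iff ac_simps K_sym[of z])
        then have "(\<integral>y. F y z \<partial>lborel) = indicator I z * f z * (\<integral>y. indicator I y * (Kker a p z y * e y) \<partial>lborel)"
          by (simp only: integral_mult_right_zero)
        also have "\<dots> = \<kappa> * (indicator I z * (f z * e z * p z * w z))"
        proof (cases "z \<in> I")
          case True
          then have "p z * w z \<noteq> 0" using elim by auto
          then show ?thesis using Lt_pw[of z e] eig[OF True] by (simp add: ac_simps)
        qed simp
        finally show ?case .
      qed
    qed measurable
    also have "\<dots> = \<kappa> * ipw a b p w f e" unfolding ipw_alt by simp
    finally show ?thesis .
  qed
  show ?thesis using L R fub by simp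
qed

end

context S begin

lemma L2pw_abs_sum:
  assumes e: "L2pw a b p w e" and f: "L2pw a b p w f"
  shows "L2pw a b p w (\<lambda>y. \<bar>e y\<bar> + \<bar>f y\<bar>)"
proof -
  have em[measurable]: "e \<in> borel_measurable borel" using L2pw_meas[OF e] .
  have fm[measurable]: "f \<in> borel_measurable borel" using L2pw_meas[OF f] .
  have "integrable lborel (\<lambda>y. indicator I y * ((\<bar>e y\<bar> + \<bar>f y\<bar>)\<^sup>2 * p y * w y))"
  proof (rule Bochner_Integration.integrable_bound)
    show "integrable lborel (\<lambda>y. 2 * (indicator I y * ((e y)\<^sup>2 * p y * w y)) + 2 * (indicator I y * ((f y)\<^sup>2 * p y * w y)))"
      using L2pw_int[OF e] L2pw_int[OF f] by auto
    show "AE y in lborel. norm (indicator I y * ((\<bar>e y\<bar> + \<bar>f y\<bar>)\<^sup>2 * p y * w y))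
      \<le> norm (2 * (indicator I y * ((e y)\<^sup>2 * p y * w y)) + 2 * (indicator I y * ((f y)\<^sup>2 * p y * w y)))"
      using pw_nn
    proof eventually_elim
      case (elim y)
      show ?case
      proof (cases "y \<in> I")
        case True
        then have q: "p y * w y \<ge> 0" using elim by auto
        have sq: "(\<bar>e y\<bar> + \<bar>f y\<bar>)\<^sup>2 \<le> 2 * (e y)\<^sup>2 + 2 * (f y)\<^sup>2"
        proof -
          have "0 \<le> (\<bar>e y\<bar> - \<bar>f y\<bar>)\<^sup>2" by simp
          then show ?thesis by (simp add: power2_eq_square algebra_simps)
        qed
        have "(\<bar>e y\<bar> + \<bar>f y\<bar>)\<^sup>2 * (p y * w y) \<le> (2 * (e y)\<^sup>2 + 2 * (f y)\<^sup>2) * (p y * w y)"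
          using sq q by (rule mult_right_mono)
        moreover have "0 \<le> (\<bar>e y\<bar> + \<bar>f y\<bar>)\<^sup>2 * (p y * w y)" using q by simp
        ultimately show ?thesis using True q by (simp add: algebra_simps)
      qed simp
    qed
  qed measurable
  then show ?thesis unfolding L2pw_def set_integrable_def by simp
qed

lemma onorm_sum:
  assumes A: "finite A" and L: "\<And>i. i \<in> A \<Longrightarrow> L2pw a b p w (e i)"
    and on: "\<And>i j. i \<in> A \<Longrightarrow> j \<in> A \<Longrightarrow> ipw a b p w (e i) (e j) = (if i = j then 1 else 0)"
  shows "ipw a b p w (\<lambda>y. \<Sum>i\<in>A. c i * e i y) (\<lambda>y. \<Sum>i\<in>A. c i * e i y) = (\<Sum>i\<in>A. (c i)\<^sup>2)"
proof -
  define v where "v = (\<lambda>y. \<Sum>i\<in>A. c i * e i y)"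
  have Lv: "L2pw a b p w v" unfolding v_def using L2pw_sum[OF A L] .
  have ei: "ipw a b p w v (e i) = c i" if i: "i \<in> A" for i
  proof -
    have "ipw a b p w v (e i) = ipw a b p w (e i) v" by (rule ipw_sym)
    also have "\<dots> = (\<Sum>j\<in>A. c j * ipw a b p w (e i) (e j))"
      unfolding v_def using ipw_sum_right[OF A L[OF i] L] .
    also have "\<dots> = (\<Sum>j\<in>A. if i = j then c j else 0)"
      using on[OF i] by (intro sum.cong) auto
    also have "\<dots> = c i" using i A by simp
    finally show ?thesis .
  qed
  have "ipw a b p w v v = (\<Sum>i\<in>A. c i * ipw a b p w v (e i))"
    unfolding v_def[of] using ipw_sum_right[OF A Lv L] by (simp add: v_def)
  also have "\<dots> = (\<Sum>i\<in>A. (c i)\<^sup>2)" using ei by (simp add: power2_eq_square)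
  finally show ?thesis unfolding v_def .
qed

lemma bessel:
  assumes A: "finite A" and L: "\<And>i. i \<in> A \<Longrightarrow> L2pw a b p w (e i)" and h: "L2pw a b p w h"
    and on: "\<And>i j. i \<in> A \<Longrightarrow> j \<in> A \<Longrightarrow> ipw a b p w (e i) (e j) = (if i = j then 1 else 0)"
  shows "(\<Sum>i\<in>A. (ipw a b p w h (e i))\<^sup>2) \<le> ipw a b p w h h"
proof -
  define c where "c i = ipw a b p w h (e i)" for i
  define v where "v = (\<lambda>y. \<Sum>i\<in>A. c i * e i y)"
  have Lv: "L2pw a b p w v" unfolding v_def using L2pw_sum[OF A L] .
  have vv: "ipw a b p w v v = (\<Sum>i\<in>A. (c i)\<^sup>2)" unfolding v_def by (rule onorm_sum[OF A L on])
  have hv: "ipw a b p w h v = (\<Sum>i\<in>A. (c i)\<^sup>2)"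
    unfolding v_def using ipw_sum_right[OF A h L] by (simp add: c_def power2_eq_square)
  have Lhv: "L2pw a b p w (\<lambda>y. h y - v y)" using L2pw_lin[OF h Lv, of 1 "-1"] by simp
  have "0 \<le> ipw a b p w (\<lambda>y. h y - v y) (\<lambda>y. h y - v y)" by (rule ipw_self_nn)
  also have "\<dots> = ipw a b p w (\<lambda>y. h y - v y) h - ipw a b p w (\<lambda>y. h y - v y) v"
    by (rule ipw_diff_right[OF Lhv h Lv])
  also have "ipw a b p w (\<lambda>y. h y - v y) h = ipw a b p w h h - ipw a b p w h v"
    using ipw_diff_right[OF h h Lv] ipw_sym[of "\<lambda>y. h y - v y" h] by simp
  also have "ipw a b p w (\<lambda>y. h y - v y) v = ipw a b p w v h - ipw a b p w v v"
    using ipw_diff_right[OF Lv h Lv] ipw_sym[of "\<lambda>y. h y - v y" v] by simp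
  finally show ?thesis using vv hv ipw_sym[of v h] by (simp add: c_def)
qed

lemma kappa_mono:
  assumes "\<forall>i\<ge>1. \<kappa> (Suc i) \<le> (\<kappa> i :: real)"
  shows "i \<ge> 2 \<Longrightarrow> \<kappa> i \<le> \<kappa> 2"
proof (induction i rule: dec_induct)
  case base then show ?case by simp
next
  case (step i) then show ?case using assms by (metis le_trans one_le_numeral order.trans le_SucI[of 1] le_numeral_extra(4) less_imp_le_nat order_le_less_trans) 
qed

end

context S begin

lemma main_with_key:
  fixes \<kappa> :: "nat \<Rightarrow> real" and e :: "nat \<Rightarrow> real \<Rightarrow> real"
    and x :: real and g0 :: "real \<Rightarrow> real" and n :: nat
  assumes key: "\<And>u. L2pw a b p w u \<Longrightarrow> (\<forall>y. 0 \<le> u y) \<Longrightarrow> integrable (lborel \<Otimes>\<^sub>M lborel)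
       (\<lambda>(y,z). indicator I y * indicator I z * Kker a p y z * u y * u z)"
    and cpt: "Lt_compact a b p w"
    and eig: "eigensystem a b p w \<kappa> e"
    and xI: "x \<in> einterval a b"
    and kx: "L2pw a b p w (kw a p w x)"
    and g0: "E2 a b p w g0"
    and n: "n \<ge> 1"
    and Bn: "normpw a b p w (kw a p w x)
               * normpw a b p w (\<lambda>y. g0 y - ipw a b p w g0 (e 1) * e 1 y)
               * (\<kappa> 2 / Cpw a b p w) ^ (n - 1)
             < Cpw a b p w * \<bar>ipw a b p w g0 (e 1) * e 1 x\<bar>"
  shows "(let B = normpw a b p w (kw a p w x)
               * normpw a b p w (\<lambda>y. g0 y - ipw a b p w g0 (e 1) * e 1 y)
               * (\<kappa> 2 / Cpw a b p w) ^ (n - 1)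
          in \<bar>(Lt a b p w ^^ (n + 1)) g0 x / (Lt a b p w ^^ n) g0 x - Cpw a b p w\<bar>
             \<le> (if B = 0 then 0
                 else 2 * inverse (\<bar>ipw a b p w g0 (e 1) * e 1 x\<bar> / B - 1 / Cpw a b p w)))"
proof -
  let ?L = "Lt a b p w"
  let ?ip = "ipw a b p w"
  let ?nm = "normpw a b p w"
  have eE: "\<And>i. i \<ge> 1 \<Longrightarrow> E2 a b p w (e i)" using eig unfolding eigensystem_def by auto
  have eL: "\<And>i. i \<ge> 1 \<Longrightarrow> L2pw a b p w (e i)" using eE unfolding E2_def by auto
  have on: "\<And>i j. i \<ge> 1 \<Longrightarrow> j \<ge> 1 \<Longrightarrow> ?ip (e i) (e j) = (if i = j then 1 else 0)"
    using eig unfolding eigensystem_def by auto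
  have comp: "\<And>g. E2 a b p w g \<Longrightarrow>
        (\<lambda>N. ?nm (\<lambda>x. g x - (\<Sum>i=1..N. ?ip g (e i) * e i x))) \<longlonglongrightarrow> 0"
    using eig unfolding eigensystem_def by auto
  have eq: "\<And>i z. i \<ge> 1 \<Longrightarrow> z \<in> I \<Longrightarrow> ?L (e i) z = \<kappa> i * e i z"
    using eig unfolding eigensystem_def by auto
  have kpos: "\<And>i. i \<ge> 1 \<Longrightarrow> \<kappa> i > 0" using eig unfolding eigensystem_def by auto
  have kmono: "\<forall>i\<ge>1. \<kappa> (Suc i) \<le> \<kappa> i" using eig unfolding eigensystem_def by auto
  have k1: "\<kappa> 1 = Cpw a b p w" using eig unfolding eigensystem_def by auto
  have k2le: "\<And>i. i \<ge> 2 \<Longrightarrow> \<kappa> i \<le> \<kappa> 2" using kappa_mono[OF kmono] by auto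
  have k21: "\<kappa> 2 \<le> \<kappa> 1" using kmono by (metis le_numeral_extra(4) numeral_2_eq_2 One_nat_def)
  have E2L: "\<And>f. E2 a b p w f \<Longrightarrow> L2pw a b p w f" unfolding E2_def by auto
  have Lte: "\<And>i. i \<ge> 1 \<Longrightarrow> ?ip (kw a p w x) (e i) = \<kappa> i * e i x"
    using Lt_ipw[OF L2pw_meas[OF eL]] eq xI by metis
  have coef: "E2 a b p w ((?L ^^ m) g0) \<and> (\<forall>i\<ge>1. ?ip ((?L ^^ m) g0) (e i) = \<kappa> i ^ m * ?ip g0 (e i))" for m
  proof (induction m)
    case 0 then show ?case using g0 by simp
  next
    case (Suc m)
    define f where "f = (?L ^^ m) g0"
    have fE: "E2 a b p w f" using Suc f_def by simp
    have LfE: "E2 a b p w (?L f)" using cpt fE unfolding Lt_compact_def by auto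
    have c: "?ip (?L f) (e i) = \<kappa> i ^ Suc m * ?ip g0 (e i)" if i: "i \<ge> 1" for i
    proof -
      have "?ip (?L f) (e i) = \<kappa> i * ?ip f (e i)"
      proof (rule Lt_sym[OF E2L[OF fE] eL[OF i]])
        show "integrable (lborel \<Otimes>\<^sub>M lborel) (\<lambda>(y, z). indicator I y * indicator I z * Kker a p y z *
             (\<bar>e i y\<bar> + \<bar>f y\<bar>) * (\<bar>e i z\<bar> + \<bar>f z\<bar>))"
          using key[OF L2pw_abs_sum[OF eL[OF i] E2L[OF fE]]] by simp
        show "?L f \<in> borel_measurable borel" using L2pw_meas[OF E2L[OF LfE]] .
        show "\<And>z. z \<in> I \<Longrightarrow> ?L (e i) z = \<kappa> i * e i z" using eq[OF i] .
      qed
      also have "\<dots> = \<kappa> i ^ Suc m * ?ip g0 (e i)" using Suc i unfolding f_def by simp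
      finally show ?thesis .
    qed
    show ?case using LfE c unfolding f_def by simp
  qed
  have expn: "(\<lambda>N. \<Sum>i=1..N. ?ip f (e i) * (\<kappa> i * e i x)) \<longlonglongrightarrow> ?L f x" if fE: "E2 a b p w f" for f
  proof -
    have fL: "L2pw a b p w f" using E2L[OF fE] .
    define S where "S N = (\<lambda>y. \<Sum>i=1..N. ?ip f (e i) * e i y)" for N
    have SL: "L2pw a b p w (S N)" for N unfolding S_def by (rule L2pw_sum) (auto intro: eL)
    have d: "?ip (kw a p w x) (\<lambda>y. f y - S N y) = ?L f x - (\<Sum>i=1..N. ?ip f (e i) * (\<kappa> i * e i x))" for N
    proof -
      have "?ip (kw a p w x) (\<lambda>y. f y - S N y) = ?ip (kw a p w x) f - ?ip (kw a p w x) (S N)"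
        by (rule ipw_diff_right[OF kx fL SL])
      also have "?ip (kw a p w x) f = ?L f x" using Lt_ipw[OF L2pw_meas[OF fL]] by simp
      also have "?ip (kw a p w x) (S N) = (\<Sum>i=1..N. ?ip f (e i) * ?ip (kw a p w x) (e i))"
        unfolding S_def by (rule ipw_sum_right) (auto intro: eL kx)
      also have "\<dots> = (\<Sum>i=1..N. ?ip f (e i) * (\<kappa> i * e i x))"
        by (intro sum.cong) (auto simp: Lte)
      finally show ?thesis .
    qed
    have "(\<lambda>N. ?L f x - (\<Sum>i=1..N. ?ip f (e i) * (\<kappa> i * e i x))) \<longlonglongrightarrow> 0"
    proof (rule Lim_null_comparison)
      show "\<forall>\<^sub>F N in sequentially. norm (?L f x - (\<Sum>i=1..N. ?ip f (e i) * (\<kappa> i * e i x)))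
          \<le> ?nm (kw a p w x) * ?nm (\<lambda>y. f y - S N y)"
      proof (rule always_eventually, rule allI)
        fix N
        have "L2pw a b p w (\<lambda>y. f y - S N y)" using L2pw_lin[OF fL SL, of 1 "-1"] by simp
        then show "norm (?L f x - (\<Sum>i=1..N. ?ip f (e i) * (\<kappa> i * e i x))) \<le> ?nm (kw a p w x) * ?nm (\<lambda>y. f y - S N y)"
        proof -
          have "\<bar>?ip (kw a p w x) (\<lambda>y. f y - S N y)\<bar> \<le> ?nm (kw a p w x) * ?nm (\<lambda>y. f y - S N y)"
            using cauchy_schwarz[OF kx \<open>L2pw a b p w (\<lambda>y. f y - S N y)\<close>] .
          then show ?thesis using d[of N] by simp
        qed
      qed
      have "(\<lambda>N. ?nm (\<lambda>y. f y - S N y)) \<longlonglongrightarrow> 0" using comp[OF fE] unfolding S_def .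
      then show "(\<lambda>N. ?nm (kw a p w x) * ?nm (\<lambda>y. f y - S N y)) \<longlonglongrightarrow> 0"
        by (simp add: tendsto_mult_right_zero)
    qed
    then have "(\<lambda>N. ?L f x - (?L f x - (\<Sum>i=1..N. ?ip f (e i) * (\<kappa> i * e i x)))) \<longlonglongrightarrow> ?L f x - 0"
      by (intro tendsto_intros)
    then show ?thesis by simp
  qed
  define h where "h = (\<lambda>y. g0 y - ?ip g0 (e 1) * e 1 y)"
  define Nk where "Nk = ?nm (kw a p w x)"
  define Nh where "Nh = ?nm h"
  have g0L: "L2pw a b p w g0" using E2L[OF g0] .
  have hL: "L2pw a b p w h" unfolding h_def using L2pw_lin[OF g0L eL[of 1], of 1 "- ?ip g0 (e 1)"] by simp
  have hc: "?ip h (e i) = ?ip g0 (e i)" if i: "i \<ge> 2" for i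
  proof -
    have aL: "L2pw a b p w (\<lambda>y. ?ip g0 (e 1) * e 1 y)" using L2pw_lin[OF eL[of 1] eL[of 1], of "?ip g0 (e 1)" 0] by simp
    have "?ip h (e i) = ?ip (e i) h" by (rule ipw_sym)
    also have "\<dots> = ?ip (e i) g0 - ?ip (e i) (\<lambda>y. ?ip g0 (e 1) * e 1 y)"
      unfolding h_def using i by (intro ipw_diff_right[OF eL g0L aL]) auto
    also have "?ip (e i) (\<lambda>y. ?ip g0 (e 1) * e 1 y) = 0"
      using on[of i 1] i by (simp add: ipw_scale_right)
    finally show ?thesis by (simp add: ipw_sym)
  qed
  have tail: "\<bar>\<Sum>i\<in>{2..N}. (\<kappa> i ^ m * ?ip g0 (e i)) * (\<kappa> i * e i x)\<bar> \<le> Nk * (\<kappa> 2 ^ m * Nh)" for N m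
  proof -
    define v where "v = (\<lambda>y. \<Sum>i\<in>{2..N}. (\<kappa> i ^ m * ?ip g0 (e i)) * e i y)"
    have vL: "L2pw a b p w v" unfolding v_def by (rule L2pw_sum) (auto intro: eL)
    have "?ip (kw a p w x) v = (\<Sum>i\<in>{2..N}. (\<kappa> i ^ m * ?ip g0 (e i)) * ?ip (kw a p w x) (e i))"
      unfolding v_def by (rule ipw_sum_right) (auto intro: eL kx)
    also have "\<dots> = (\<Sum>i\<in>{2..N}. (\<kappa> i ^ m * ?ip g0 (e i)) * (\<kappa> i * e i x))"
      by (intro sum.cong) (auto simp: Lte)
    finally have iv: "?ip (kw a p w x) v = (\<Sum>i\<in>{2..N}. (\<kappa> i ^ m * ?ip g0 (e i)) * (\<kappa> i * e i x))" .
    have "?ip v v = (\<Sum>i\<in>{2..N}. (\<kappa> i ^ m * ?ip g0 (e i))\<^sup>2)"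
      unfolding v_def by (rule onorm_sum) (auto intro: eL simp: on)
    also have "\<dots> \<le> (\<Sum>i\<in>{2..N}. (\<kappa> 2 ^ m)\<^sup>2 * (?ip h (e i))\<^sup>2)"
    proof (rule sum_mono)
      fix i assume i: "i \<in> {2..N}"
      have "\<kappa> i ^ m \<le> \<kappa> 2 ^ m" using i kpos[of i] k2le[of i] by (intro power_mono) auto
      then have "(\<kappa> i ^ m)\<^sup>2 \<le> (\<kappa> 2 ^ m)\<^sup>2" by (rule power_mono) (use kpos[of i] i in auto)
      then show "(\<kappa> i ^ m * ?ip g0 (e i))\<^sup>2 \<le> (\<kappa> 2 ^ m)\<^sup>2 * (?ip h (e i))\<^sup>2"
        using hc[of i] i by (simp add: power_mult_distrib mult_right_mono)
    qed
    also have "\<dots> = (\<kappa> 2 ^ m)\<^sup>2 * (\<Sum>i\<in>{2..N}. (?ip h (e i))\<^sup>2)"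
      by (simp add: sum_distrib_left)
    also have "\<dots> \<le> (\<kappa> 2 ^ m)\<^sup>2 * ?ip h h"
      by (intro mult_left_mono bessel) (auto intro: eL hL simp: on)
    finally have vv: "?ip v v \<le> (\<kappa> 2 ^ m * Nh)\<^sup>2"
      unfolding Nh_def normpw_sq[symmetric] by (simp add: power_mult_distrib)
    have nv: "?nm v \<le> \<kappa> 2 ^ m * Nh"
    proof (rule power2_le_imp_le)
      show "(?nm v)\<^sup>2 \<le> (\<kappa> 2 ^ m * Nh)\<^sup>2" using vv normpw_sq by simp
      show "0 \<le> \<kappa> 2 ^ m * Nh" unfolding Nh_def using kpos[of 2] normpw_nn by simp
    qed
    have "\<bar>?ip (kw a p w x) v\<bar> \<le> Nk * ?nm v" unfolding Nk_def by (rule cauchy_schwarz[OF kx vL])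
    also have "\<dots> \<le> Nk * (\<kappa> 2 ^ m * Nh)" unfolding Nk_def using nv normpw_nn by (intro mult_left_mono) auto
    finally show ?thesis using iv by simp
  qed
  have Tb: "\<bar>(?L ^^ k) g0 x - ?ip g0 (e 1) * e 1 x * \<kappa> 1 ^ k\<bar> \<le> Nk * (\<kappa> 2 ^ (k - 1) * Nh)" if k: "k \<ge> 1" for k
  proof -
    define f where "f = (?L ^^ (k - 1)) g0"
    have fE: "E2 a b p w f" using coef unfolding f_def by simp
    have Lf: "?L f = (?L ^^ k) g0" unfolding f_def using k by (cases k) auto
    have fc: "\<And>i. i \<ge> 1 \<Longrightarrow> ?ip f (e i) = \<kappa> i ^ (k - 1) * ?ip g0 (e i)" using coef unfolding f_def by simp
    have lim: "(\<lambda>N. \<Sum>i=1..N. ?ip f (e i) * (\<kappa> i * e i x)) \<longlonglongrightarrow> (?L ^^ k) g0 x"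
      using expn[OF fE] Lf by simp
    have "(\<lambda>N. \<bar>(\<Sum>i=1..N. ?ip f (e i) * (\<kappa> i * e i x)) - ?ip g0 (e 1) * e 1 x * \<kappa> 1 ^ k\<bar>)
        \<longlonglongrightarrow> \<bar>(?L ^^ k) g0 x - ?ip g0 (e 1) * e 1 x * \<kappa> 1 ^ k\<bar>"
      by (intro tendsto_intros lim)
    then show ?thesis
    proof (rule LIMSEQ_le_const2)
      show "\<exists>N0. \<forall>N\<ge>N0. \<bar>(\<Sum>i=1..N. ?ip f (e i) * (\<kappa> i * e i x)) - ?ip g0 (e 1) * e 1 x * \<kappa> 1 ^ k\<bar>
          \<le> Nk * (\<kappa> 2 ^ (k - 1) * Nh)"
      proof (intro exI allI impI)
        fix N :: nat assume N: "N \<ge> 1"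
        have "(\<Sum>i=1..N. ?ip f (e i) * (\<kappa> i * e i x))
            = ?ip f (e 1) * (\<kappa> 1 * e 1 x) + (\<Sum>i=Suc 1..N. ?ip f (e i) * (\<kappa> i * e i x))"
          using N by (simp add: sum.atLeast_Suc_atMost)
        also have "?ip f (e 1) * (\<kappa> 1 * e 1 x) = ?ip g0 (e 1) * e 1 x * \<kappa> 1 ^ k"
          using fc[of 1] k by (cases k) (auto simp: ac_simps)
        also have "(\<Sum>i=Suc 1..N. ?ip f (e i) * (\<kappa> i * e i x))
            = (\<Sum>i\<in>{2..N}. (\<kappa> i ^ (k - 1) * ?ip g0 (e i)) * (\<kappa> i * e i x))"
          by (intro sum.cong) (auto simp: fc)
        finally show "\<bar>(\<Sum>i=1..N. ?ip f (e i) * (\<kappa> i * e i x)) - ?ip g0 (e 1) * e 1 x * \<kappa> 1 ^ k\<bar>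
          \<le> Nk * (\<kappa> 2 ^ (k - 1) * Nh)" using tail[where N=N and m="k - 1"] by simp
      qed
    qed
  qed
  define \<alpha> where "\<alpha> = ?ip g0 (e 1) * e 1 x"
  define C where "C = Cpw a b p w"
  have Cp: "C > 0" unfolding C_def using k1 kpos[of 1] by simp
  have T1: "\<bar>(?L ^^ n) g0 x - \<alpha> * C ^ n\<bar> \<le> Nk * Nh * \<kappa> 2 ^ (n - 1)"
    using Tb[OF n] unfolding \<alpha>_def C_def k1 by (simp add: ac_simps)
  have T2: "\<bar>(?L ^^ (n + 1)) g0 x - \<alpha> * C ^ (n + 1)\<bar> \<le> Nk * Nh * \<kappa> 2 ^ n"
    using Tb[of "n + 1"] unfolding \<alpha>_def C_def k1 by (simp add: ac_simps)
  have fa: "\<bar>(\<alpha> * C ^ (n + 1) + ((?L ^^ (n + 1)) g0 x - \<alpha> * C ^ (n + 1))) / (\<alpha> * C ^ n + ((?L ^^ n) g0 x - \<alpha> * C ^ n)) - C\<bar>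
     \<le> (if Nk * Nh * (\<kappa> 2 / C) ^ (n - 1) = 0 then 0 else 2 * inverse (\<bar>\<alpha>\<bar> / (Nk * Nh * (\<kappa> 2 / C) ^ (n - 1)) - 1 / C))"
  proof (rule final_alg[OF Cp n refl _ _ _ _ T1 T2])
    show "0 \<le> Nk" unfolding Nk_def by (rule normpw_nn)
    show "0 \<le> Nh" unfolding Nh_def by (rule normpw_nn)
    show "0 < \<kappa> 2" using kpos[of 2] by simp
    show "\<kappa> 2 \<le> C" using k21 k1 unfolding C_def by simp
    show "Nk * Nh * (\<kappa> 2 / C) ^ (n - 1) < C * \<bar>\<alpha>\<bar>"
      using Bn unfolding Nk_def Nh_def h_def C_def \<alpha>_def .
  qed
  show ?thesis using fa unfolding Let_def Nk_def Nh_def h_def C_def \<alpha>_def by simp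
qed

end

lemma prod_integrable:
  fixes F G :: "real \<Rightarrow> real"
  assumes F: "integrable lborel F" and G: "integrable lborel G"
  shows "integrable (lborel \<Otimes>\<^sub>M lborel) (\<lambda>(x,y). F x * G y)"
proof (rule lborel_pair.Fubini_integrable)
  have [measurable]: "F \<in> borel_measurable lborel" "G \<in> borel_measurable lborel"
    using F G by auto
  show "(\<lambda>(x,y). F x * G y) \<in> borel_measurable (lborel \<Otimes>\<^sub>M lborel)" by measurable
  have "integrable lborel (\<lambda>x. \<bar>F x\<bar> * (\<integral>y. \<bar>G y\<bar> \<partial>lborel))"
    using F by (intro integrable_mult_left) auto
  then show "integrable lborel (\<lambda>x. \<integral>y. norm ((\<lambda>(x,y). F x * G y) (x, y)) \<partial>lborel)"
    by (simp add: abs_mult)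
  show "AE x in lborel. integrable lborel (\<lambda>y. (\<lambda>(x,y). F x * G y) (x, y))"
    using G by simp
qed

lemma deriv_zero_outside:
  assumes der: "\<And>x. (\<phi> has_real_derivative \<phi>' x) (at x)"
    and z: "\<And>x. x \<notin> {c..d} \<Longrightarrow> \<phi> x = (0::real)" and s: "s \<notin> {c..d}"
  shows "\<phi>' s = 0"
proof -
  obtain S where S: "open S" "s \<in> S" "\<And>x. x \<in> S \<Longrightarrow> x \<notin> {c..d}"
  proof (cases "s < c")
    case True then show ?thesis using that[of "{..<c}"] by auto
  next
    case False then have "s > d" using s by auto
    then show ?thesis using that[of "{d<..}"] by auto
  qed
  have "((\<lambda>_. 0) has_field_derivative \<phi>' s) (at s)"
    using has_field_derivative_transform_within_open[OF der S(1,2)] z S(3) by auto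
  moreover have "((\<lambda>_. 0::real) has_field_derivative 0) (at s)" by simp
  ultimately show ?thesis using DERIV_unique by blast
qed

context S begin

lemma P_ind:
  assumes t: "t \<in> I"
  shows "(\<integral>s. indicator I s * p s * indicator {..t} s \<partial>lborel) = Pcdf a p t"
  unfolding P_I[OF t]
proof (rule integral_cong_AE)
  show "AE s in lborel. indicator I s * p s * indicator {..t} s = indicator (einterval a (ereal t)) s * p s"
    using AE_lborel_singleton[of t]
  proof eventually_elim
    case (elim s)
    have "s \<in> I \<and> s \<le> t \<longleftrightarrow> s \<in> einterval a (ereal t)"
      using elim t I_sub[OF t] by (auto simp: einterval_def)
    then show ?case by (auto simp: indicator_def)
  qed
qed measurable

lemma K_le1: "y \<in> I \<Longrightarrow> z \<in> I \<Longrightarrow> Kker a p y z \<le> 1"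
  unfolding Kker_def using P_nn[OF min_I] P_le1[OF min_I] P_nn[OF max_I] P_le1[OF max_I]
  by (simp add: mult_le_one)

lemma K_alt: "y \<in> I \<Longrightarrow> z \<in> I \<Longrightarrow> Kker a p y z = Pcdf a p (min y z) - Pcdf a p y * Pcdf a p z"
  unfolding Kker_def by (cases "y \<le> z") (auto simp: min_def max_def algebra_simps)

end

lemma int_cmult_eq:
  fixes f g :: "'a \<Rightarrow> real"
  assumes "\<And>s. f s = c * g s"
  shows "(\<integral>s. f s \<partial>M) = c * (\<integral>s. g s \<partial>M)"
proof -
  have "f = (\<lambda>s. c * g s)" using assms by auto
  then show ?thesis by simp
qed

context S begin

lemma var_formula:
  fixes v :: "real \<Rightarrow> real" and c d :: real
  assumes vint: "integrable lborel v" and vnn: "\<And>y. v y \<ge> 0"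
    and vsupp: "\<And>y. y \<notin> {c..d} \<Longrightarrow> v y = 0" and c: "c \<in> I" and d: "d \<in> I"
  defines "V \<equiv> (\<lambda>s. \<integral>y. indicator {s..} y * v y \<partial>lborel)"
  shows "integrable (lborel \<Otimes>\<^sub>M lborel) (\<lambda>(y,z). indicator I y * indicator I z * Kker a p y z * v y * v z)"
    and "var_p a b p (\<lambda>s. - V s) = integral\<^sup>L (lborel \<Otimes>\<^sub>M lborel) (\<lambda>(y,z). indicator I y * indicator I z * Kker a p y z * v y * v z)"
proof -
  have vm[measurable]: "v \<in> borel_measurable borel" using vint by auto
  have vm'[measurable]: "v \<in> borel_measurable lborel" using vint by auto
  have vI: "v y \<noteq> 0 \<Longrightarrow> y \<in> I" for y
  proof -
    assume "v y \<noteq> 0"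
    then have "y \<in> {c..d}" using vsupp by blast
    then show "y \<in> I" using c d by (auto simp: einterval_def) (meson ereal_less_eq(3) le_less_trans less_le_trans)+
  qed
  define q where "q s = indicator I s * p s" for s
  have qint: "integrable lborel q" using p_int unfolding q_def set_integrable_def by simp
  have qm[measurable]: "q \<in> borel_measurable borel" unfolding q_def by measurable
  define T where "T = (\<integral>y. v y \<partial>lborel)"
  have Vm[measurable]: "V \<in> borel_measurable borel"
  proof -
    have "(\<lambda>(s, y). indicator {s..} y * v y) \<in> borel_measurable (borel \<Otimes>\<^sub>M lborel)"
      unfolding indicator_def atLeast_iff by measurable
    then show ?thesis unfolding V_def
      using lborel.borel_measurable_lebesgue_integral[of "\<lambda>s y. indicator {s..} y * v y" borel] by simp
  qed
  have iv: "integrable lborel (\<lambda>y. indicator {s..} y * v y)" for s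
    using integrable_mult_indicator[OF _ vint, of "{s..}"] by simp
  have V0: "0 \<le> V s" for s unfolding V_def by (rule integral_nonneg_AE) (auto simp: vnn)
  have VT: "V s \<le> T" for s unfolding V_def T_def
    by (rule integral_mono[OF iv vint]) (auto simp: vnn indicator_def)
  have T0: "0 \<le> T" using V0[of 0] VT[of 0] by linarith
  have mean: "(\<integral>s. q s * V s \<partial>lborel) = (\<integral>y. v y * Pcdf a p y \<partial>lborel)"
  proof -
    define F where "F s y = q s * (indicator {s..} y * v y)" for s y
    have Fint: "integrable (lborel \<Otimes>\<^sub>M lborel) (\<lambda>(s,y). F s y)"
    proof (rule Bochner_Integration.integrable_bound[OF prod_integrable[OF qint vint]])
      show "(\<lambda>(s,y). F s y) \<in> borel_measurable (lborel \<Otimes>\<^sub>M lborel)"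
        unfolding F_def indicator_def atLeast_iff atMost_iff by measurable
      show "AE x in lborel \<Otimes>\<^sub>M lborel. norm ((\<lambda>(s,y). F s y) x) \<le> norm ((\<lambda>(x,y). q x * v y) x)"
        by (rule AE_I2) (auto simp: F_def abs_mult indicator_def)
    qed
    have "(\<integral>s. q s * V s \<partial>lborel) = (\<integral>s. (\<integral>y. F s y \<partial>lborel) \<partial>lborel)"
      unfolding F_def V_def by simp
    also have "\<dots> = (\<integral>y. (\<integral>s. F s y \<partial>lborel) \<partial>lborel)"
      using lborel_pair.Fubini_integral[OF Fint] by simp
    also have "\<dots> = (\<integral>y. v y * Pcdf a p y \<partial>lborel)"
    proof (rule Bochner_Integration.integral_cong[OF refl])
      fix y
      have "(\<integral>s. F s y \<partial>lborel) = v y * (\<integral>s. indicator I s * p s * indicator {..y} s \<partial>lborel)"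
        by (rule int_cmult_eq) (simp add: F_def q_def indicator_def)
      also have "\<dots> = v y * Pcdf a p y" using P_ind vI by (cases "v y = 0") auto
      finally show "(\<integral>s. F s y \<partial>lborel) = v y * Pcdf a p y" .
    qed
    finally show ?thesis .
  qed
  have inner: "(\<integral>s. q s * indicator {..y} s * V s \<partial>lborel) = (\<integral>z. v z * Pcdf a p (min y z) \<partial>lborel)"
    if y: "y \<in> I" for y
  proof -
    define F where "F s z = q s * indicator {..y} s * (indicator {s..} z * v z)" for s z
    have Fint: "integrable (lborel \<Otimes>\<^sub>M lborel) (\<lambda>(s,z). F s z)"
    proof (rule Bochner_Integration.integrable_bound[OF prod_integrable[OF qint vint]])
      show "(\<lambda>(s,z). F s z) \<in> borel_measurable (lborel \<Otimes>\<^sub>M lborel)"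
        unfolding F_def indicator_def atLeast_iff atMost_iff by measurable
      show "AE x in lborel \<Otimes>\<^sub>M lborel. norm ((\<lambda>(s,z). F s z) x) \<le> norm ((\<lambda>(x,y). q x * v y) x)"
        by (rule AE_I2) (auto simp: F_def abs_mult indicator_def)
    qed
    have "(\<integral>s. q s * indicator {..y} s * V s \<partial>lborel) = (\<integral>s. (\<integral>z. F s z \<partial>lborel) \<partial>lborel)"
      unfolding F_def V_def by simp
    also have "\<dots> = (\<integral>z. (\<integral>s. F s z \<partial>lborel) \<partial>lborel)"
      using lborel_pair.Fubini_integral[OF Fint] by simp
    also have "\<dots> = (\<integral>z. v z * Pcdf a p (min y z) \<partial>lborel)"
    proof (rule Bochner_Integration.integral_cong[OF refl])
      fix z
      have "(\<integral>s. F s z \<partial>lborel) = v z * (\<integral>s. indicator I s * p s * indicator {..min y z} s \<partial>lborel)"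
        by (rule int_cmult_eq) (simp add: F_def q_def indicator_def)
      also have "\<dots> = v z * Pcdf a p (min y z)" using P_ind[OF min_I[OF y]] vI by (cases "v z = 0") auto
      finally show "(\<integral>s. F s z \<partial>lborel) = v z * Pcdf a p (min y z)" .
    qed
    finally show ?thesis .
  qed
  have second: "(\<integral>s. q s * (V s * V s) \<partial>lborel) = (\<integral>y. v y * (\<integral>z. v z * Pcdf a p (min y z) \<partial>lborel) \<partial>lborel)"
  proof -
    define F where "F s y = q s * V s * (indicator {s..} y * v y)" for s y
    have Fint: "integrable (lborel \<Otimes>\<^sub>M lborel) (\<lambda>(s,y). F s y)"
    proof (rule Bochner_Integration.integrable_bound[OF prod_integrable[OF _ vint]])
      show "integrable lborel (\<lambda>s. T * q s)" using qint by simp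
      show "(\<lambda>(s,y). F s y) \<in> borel_measurable (lborel \<Otimes>\<^sub>M lborel)"
        unfolding F_def indicator_def atLeast_iff atMost_iff by measurable
      show "AE x in lborel \<Otimes>\<^sub>M lborel. norm ((\<lambda>(s,y). F s y) x) \<le> norm ((\<lambda>(x,y). T * q x * v y) x)"
      proof (rule AE_I2, clarify)
        fix s y
        have "\<bar>V s\<bar> \<le> T" using V0 VT by simp
        then have "\<bar>q s\<bar> * \<bar>V s\<bar> * \<bar>v y\<bar> \<le> \<bar>q s\<bar> * T * \<bar>v y\<bar>"
          by (intro mult_right_mono mult_left_mono) auto
        then show "norm (F s y) \<le> norm (T * q s * v y)"
          using V0 VT T0 by (auto simp: F_def abs_mult indicator_def ac_simps)
      qed
    qed
    have Fs: "(\<integral>y. F s y \<partial>lborel) = q s * (V s * V s)" for s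
    proof -
      have "(\<integral>y. F s y \<partial>lborel) = (q s * V s) * (\<integral>y. indicator {s..} y * v y \<partial>lborel)"
        by (rule int_cmult_eq) (simp add: F_def)
      then show ?thesis by (simp add: V_def)
    qed
    have "(\<integral>s. q s * (V s * V s) \<partial>lborel) = (\<integral>s. (\<integral>y. F s y \<partial>lborel) \<partial>lborel)"
      by (simp add: Fs)
    also have "\<dots> = (\<integral>y. (\<integral>s. F s y \<partial>lborel) \<partial>lborel)"
      using lborel_pair.Fubini_integral[OF Fint] by simp
    also have "\<dots> = (\<integral>y. v y * (\<integral>z. v z * Pcdf a p (min y z) \<partial>lborel) \<partial>lborel)"
    proof (rule Bochner_Integration.integral_cong[OF refl])
      fix y
      have "(\<integral>s. F s y \<partial>lborel) = v y * (\<integral>s. q s * indicator {..y} s * V s \<partial>lborel)"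
        by (rule int_cmult_eq) (simp add: F_def indicator_def)
      also have "\<dots> = v y * (\<integral>z. v z * Pcdf a p (min y z) \<partial>lborel)"
        using inner vI by (cases "v y = 0") auto
      finally show "(\<integral>s. F s y \<partial>lborel) = v y * (\<integral>z. v z * Pcdf a p (min y z) \<partial>lborel)" .
    qed
    finally show ?thesis .
  qed
  have vv: "integrable (lborel \<Otimes>\<^sub>M lborel) (\<lambda>(y,z). v y * v z)"
    using prod_integrable[OF vint vint] .
  define G1 where "G1 y z = v y * (v z * Pcdf a p (min y z))" for y z
  define G2 where "G2 y z = (v y * Pcdf a p y) * (v z * Pcdf a p z)" for y z
  have bnd: "\<bar>v y * v z * r\<bar> \<le> \<bar>v y * v z\<bar>" if "v y \<noteq> 0 \<Longrightarrow> v z \<noteq> 0 \<Longrightarrow> \<bar>r\<bar> \<le> 1" for y z r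
  proof (cases "v y = 0 \<or> v z = 0")
    case False
    then have "\<bar>r\<bar> \<le> 1" using that by auto
    then have "\<bar>v y * v z\<bar> * \<bar>r\<bar> \<le> \<bar>v y * v z\<bar> * 1" by (intro mult_left_mono) auto
    then show ?thesis by (simp add: abs_mult)
  qed auto
  have G1int: "integrable (lborel \<Otimes>\<^sub>M lborel) (\<lambda>(y,z). G1 y z)"
  proof (rule Bochner_Integration.integrable_bound[OF vv])
    show "(\<lambda>(y,z). G1 y z) \<in> borel_measurable (lborel \<Otimes>\<^sub>M lborel)" unfolding G1_def by measurable
    show "AE x in lborel \<Otimes>\<^sub>M lborel. norm ((\<lambda>(y,z). G1 y z) x) \<le> norm ((\<lambda>(y,z). v y * v z) x)"
    proof (rule AE_I2, clarify)
      fix y z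
      show "norm (G1 y z) \<le> norm (v y * v z)"
        using bnd[of y z "Pcdf a p (min y z)"] vI[of y] vI[of z] P_nn[OF min_I] P_le1[OF min_I]
        by (simp add: G1_def ac_simps)
    qed
  qed
  have G2int: "integrable (lborel \<Otimes>\<^sub>M lborel) (\<lambda>(y,z). G2 y z)"
  proof (rule Bochner_Integration.integrable_bound[OF vv])
    show "(\<lambda>(y,z). G2 y z) \<in> borel_measurable (lborel \<Otimes>\<^sub>M lborel)" unfolding G2_def by measurable
    show "AE x in lborel \<Otimes>\<^sub>M lborel. norm ((\<lambda>(y,z). G2 y z) x) \<le> norm ((\<lambda>(y,z). v y * v z) x)"
    proof (rule AE_I2, clarify)
      fix y z
      have "v y \<noteq> 0 \<Longrightarrow> v z \<noteq> 0 \<Longrightarrow> \<bar>Pcdf a p y * Pcdf a p z\<bar> \<le> 1"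
        using vI[of y] vI[of z] P_nn P_le1 by (simp add: abs_mult mult_le_one)
      then show "norm (G2 y z) \<le> norm (v y * v z)"
        using bnd[of y z "Pcdf a p y * Pcdf a p z"] by (simp add: G2_def ac_simps)
    qed
  qed
  have KG: "(\<lambda>(y,z). indicator I y * indicator I z * Kker a p y z * v y * v z) = (\<lambda>(y,z). G1 y z - G2 y z)"
  proof (intro ext, clarify)
    fix y z
    show "indicator I y * indicator I z * Kker a p y z * v y * v z = G1 y z - G2 y z"
    proof (cases "v y = 0 \<or> v z = 0")
      case False
      then have "y \<in> I" "z \<in> I" using vI by auto
      then show ?thesis by (simp add: G1_def G2_def K_alt algebra_simps)
    qed (auto simp: G1_def G2_def)
  qed
  show Kint: "integrable (lborel \<Otimes>\<^sub>M lborel) (\<lambda>(y,z). indicator I y * indicator I z * Kker a p y z * v y * v z)"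
    unfolding KG using G1int G2int by (simp add: case_prod_beta')
  have I1: "integral\<^sup>L (lborel \<Otimes>\<^sub>M lborel) (\<lambda>(y,z). G1 y z) = (\<integral>s. q s * (V s * V s) \<partial>lborel)"
    unfolding second using lborel_pair.integral_fst'[OF G1int] by (simp add: G1_def)
  have I2: "integral\<^sup>L (lborel \<Otimes>\<^sub>M lborel) (\<lambda>(y,z). G2 y z) = (\<integral>s. q s * V s \<partial>lborel)\<^sup>2"
  proof -
    have "integral\<^sup>L (lborel \<Otimes>\<^sub>M lborel) (\<lambda>(y,z). G2 y z) = (\<integral>y. (\<integral>z. G2 y z \<partial>lborel) \<partial>lborel)"
      using lborel_pair.integral_fst'[OF G2int] by simp
    also have "\<dots> = (\<integral>y. v y * Pcdf a p y * (\<integral>z. v z * Pcdf a p z \<partial>lborel) \<partial>lborel)"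
      unfolding G2_def by simp
    also have "\<dots> = (\<integral>y. v y * Pcdf a p y \<partial>lborel) * (\<integral>z. v z * Pcdf a p z \<partial>lborel)"
      by simp
    finally show ?thesis unfolding mean by (simp add: power2_eq_square)
  qed
  have "var_p a b p (\<lambda>s. - V s) = (\<integral>s. q s * (V s * V s) \<partial>lborel) - (\<integral>s. q s * V s \<partial>lborel)\<^sup>2"
  proof -
    have e1: "(LINT x:I|lborel. (- V x)\<^sup>2 * p x) = (\<integral>s. q s * (V s * V s) \<partial>lborel)"
      unfolding set_lebesgue_integral_def q_def by (simp add: power2_eq_square ac_simps)
    have e2: "(LINT x:I|lborel. - V x * p x) = - (\<integral>s. q s * V s \<partial>lborel)"
      unfolding set_lebesgue_integral_def q_def by (simp add: ac_simps)
    show ?thesis unfolding var_p_def e1 e2 by simp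
  qed
  also have "\<dots> = integral\<^sup>L (lborel \<Otimes>\<^sub>M lborel) (\<lambda>(y,z). G1 y z) - integral\<^sup>L (lborel \<Otimes>\<^sub>M lborel) (\<lambda>(y,z). G2 y z)"
    using I1 I2 by simp
  also have "\<dots> = integral\<^sup>L (lborel \<Otimes>\<^sub>M lborel) (\<lambda>(y,z). G1 y z - G2 y z)"
    using Bochner_Integration.integral_diff[OF G1int G2int] by (simp add: case_prod_beta')
  finally show "var_p a b p (\<lambda>s. - V s) = integral\<^sup>L (lborel \<Otimes>\<^sub>M lborel) (\<lambda>(y,z). indicator I y * indicator I z * Kker a p y z * v y * v z)"
    unfolding KG .
qed

end

context S begin

lemma V_props:
  fixes v :: "real \<Rightarrow> real"
  assumes vint: "integrable lborel v" and vnn: "\<And>y. v y \<ge> 0"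
  defines "V \<equiv> (\<lambda>s. \<integral>y. indicator {s..} y * v y \<partial>lborel)"
  shows "V \<in> borel_measurable borel" "\<And>s. 0 \<le> V s" "\<And>s. V s \<le> (\<integral>y. v y \<partial>lborel)"
proof -
  have vm[measurable]: "v \<in> borel_measurable borel" "v \<in> borel_measurable lborel" using vint by auto
  have "(\<lambda>(s, y). indicator {s..} y * v y) \<in> borel_measurable (borel \<Otimes>\<^sub>M lborel)"
    unfolding indicator_def atLeast_iff by measurable
  then show "V \<in> borel_measurable borel" unfolding V_def
    using lborel.borel_measurable_lebesgue_integral[of "\<lambda>s y. indicator {s..} y * v y" borel] by simp
  have iv: "integrable lborel (\<lambda>y. indicator {s..} y * v y)" for s
    using integrable_mult_indicator[OF _ vint, of "{s..}"] by simp
  show "0 \<le> V s" for s unfolding V_def by (rule integral_nonneg_AE) (auto simp: vnn)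
  show "V s \<le> (\<integral>y. v y \<partial>lborel)" for s unfolding V_def
    by (rule integral_mono[OF iv vint]) (auto simp: vnn indicator_def)
qed

lemma weak_deriv_V:
  fixes v :: "real \<Rightarrow> real" and c d :: real
  assumes vint: "integrable lborel v" and vnn: "\<And>y. v y \<ge> 0"
    and vsupp: "\<And>y. y \<notin> {c..d} \<Longrightarrow> v y = 0" and c: "c \<in> I" and d: "d \<in> I"
  defines "V \<equiv> (\<lambda>s. \<integral>y. indicator {s..} y * v y \<partial>lborel)"
  shows "weak_deriv a b (\<lambda>s. - V s) v" and "L2p a b p (\<lambda>s. - V s)"
proof -
  have vm[measurable]: "v \<in> borel_measurable borel" "v \<in> borel_measurable lborel" using vint by auto
  have vI: "v y \<noteq> 0 \<Longrightarrow> y \<in> I" for y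
  proof -
    assume "v y \<noteq> 0"
    then have "y \<in> {c..d}" using vsupp by blast
    then show "y \<in> I" using c d by (auto simp: einterval_def) (meson ereal_less_eq(3) le_less_trans less_le_trans)+
  qed
  define T where "T = (\<integral>y. v y \<partial>lborel)"
  have Vm[measurable]: "V \<in> borel_measurable borel" and V0: "\<And>s. 0 \<le> V s" and VT: "\<And>s. V s \<le> T"
    using V_props[OF vint vnn] unfolding V_def T_def by auto
  have T0: "0 \<le> T" using V0[of 0] VT[of 0] by linarith
  show "L2p a b p (\<lambda>s. - V s)"
    unfolding L2p_def
  proof
    show "(\<lambda>s. - V s) \<in> borel_measurable borel" by measurable
    show "set_integrable lborel I (\<lambda>x. (- V x)\<^sup>2 * p x)"
    proof (rule set_integrable_bound[OF set_integrable_mult_right[OF p_int, of "T\<^sup>2"]])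
      show "set_borel_measurable lborel I (\<lambda>x. (- V x)\<^sup>2 * p x)"
        unfolding set_borel_measurable_def by measurable
      show "AE x in lborel. x \<in> I \<longrightarrow> norm ((- V x)\<^sup>2 * p x) \<le> norm (T\<^sup>2 * p x)"
      proof (rule AE_I2, rule impI)
        fix x
        have "(V x)\<^sup>2 \<le> T\<^sup>2" using V0[of x] VT[of x] by (intro power_mono) auto
        then have "(V x)\<^sup>2 * \<bar>p x\<bar> \<le> T\<^sup>2 * \<bar>p x\<bar>" by (intro mult_right_mono) auto
        then show "norm ((- V x)\<^sup>2 * p x) \<le> norm (T\<^sup>2 * p x)" by (simp add: abs_mult)
      qed
    qed
  qed
  show "weak_deriv a b (\<lambda>s. - V s) v"
    unfolding weak_deriv_def
  proof (intro conjI allI impI)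
    show "locint a b (\<lambda>s. - V s)"
      unfolding locint_def
    proof (intro allI impI)
      fix c' d' :: real
      show "set_integrable lborel {c'..d'} (\<lambda>s. - V s)"
      proof (rule set_integrable_bound[OF borel_integrable_atLeastAtMost'[of c' d' "\<lambda>_. T"]])
        show "continuous_on {c'..d'} (\<lambda>_. T)" by simp
        show "set_borel_measurable lborel {c'..d'} (\<lambda>s. - V s)"
          unfolding set_borel_measurable_def by measurable
        show "AE x in lborel. x \<in> {c'..d'} \<longrightarrow> norm (- V x) \<le> norm T"
          using V0 VT T0 by auto
      qed
    qed
    show "locint a b v"
      unfolding locint_def set_integrable_def
      using integrable_mult_indicator[OF _ vint] by auto
    fix \<phi> \<phi>' :: "real \<Rightarrow> real"
    assume H: "(\<forall>x. (\<phi> has_real_derivative \<phi>' x) (at x)) \<and> continuous_on UNIV \<phi>' \<and>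
        (\<exists>c d. c \<in> einterval a b \<and> d \<in> einterval a b \<and> (\<forall>x. x \<notin> {c..d} \<longrightarrow> \<phi> x = 0))"
    then have der: "\<And>x. (\<phi> has_real_derivative \<phi>' x) (at x)" and cont: "continuous_on UNIV \<phi>'" by auto
    obtain c0 d0 where c0: "c0 \<in> I" and d0: "d0 \<in> I" and z: "\<And>x. x \<notin> {c0..d0} \<Longrightarrow> \<phi> x = 0"
      using H by auto
    have z': "\<And>x. x \<notin> {c0..d0} \<Longrightarrow> \<phi>' x = 0" using deriv_zero_outside[OF der z] by blast
    have [measurable]: "\<phi>' \<in> borel_measurable borel" using cont by (rule borel_measurable_continuous_onI)
    have [measurable]: "\<phi> \<in> borel_measurable borel"
      using der by (intro borel_measurable_continuous_onI) (auto intro!: DERIV_isCont continuous_at_imp_continuous_on)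
    have c0d0I: "x \<in> {c0..d0} \<Longrightarrow> x \<in> I" for x
      using c0 d0 by (auto simp: einterval_def) (meson ereal_less_eq(3) le_less_trans less_le_trans)+
    obtain M where M: "M > 0" "\<And>x. x \<in> {c0..d0} \<Longrightarrow> \<bar>\<phi>' x\<bar> \<le> M"
    proof -
      have "compact (\<phi>' ` {c0..d0})"
        by (rule compact_continuous_image[OF continuous_on_subset[OF cont]]) auto
      then have "bounded (\<phi>' ` {c0..d0})" by (rule compact_imp_bounded)
      then show ?thesis using that unfolding bounded_pos by auto
    qed
    have gint: "integrable lborel (\<lambda>s. indicator {c0..d0} s * M)"
      using borel_integrable_atLeastAtMost'[of c0 d0 "\<lambda>_. M"] unfolding set_integrable_def by simp
    define F where "F s y = (indicator I s * \<phi>' s) * (indicator {s..} y * v y)" for s y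
    have Fint: "integrable (lborel \<Otimes>\<^sub>M lborel) (\<lambda>(s,y). F s y)"
    proof (rule Bochner_Integration.integrable_bound[OF prod_integrable[OF gint vint]])
      show "(\<lambda>(s,y). F s y) \<in> borel_measurable (lborel \<Otimes>\<^sub>M lborel)"
        unfolding F_def indicator_def atLeast_iff by measurable
      show "AE x in lborel \<Otimes>\<^sub>M lborel. norm ((\<lambda>(s,y). F s y) x) \<le> norm ((\<lambda>(s,y). indicator {c0..d0} s * M * v y) x)"
      proof (rule AE_I2, clarify)
        fix s y
        have "\<bar>indicator I s * \<phi>' s\<bar> \<le> indicator {c0..d0} s * M"
        proof (cases "s \<in> {c0..d0}")
          case True then show ?thesis using M c0d0I[OF True] by auto
        next
          case False then show ?thesis using z' by auto
        qed
        then have "\<bar>indicator I s * \<phi>' s\<bar> * \<bar>indicator {s..} y * v y\<bar> \<le> indicator {c0..d0} s * M * \<bar>v y\<bar>"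
          by (intro mult_mono) (auto simp: indicator_def)
        then show "norm (F s y) \<le> norm (indicator {c0..d0} s * M * v y)"
          using M by (simp add: F_def abs_mult)
      qed
    qed
    have inner: "(\<integral>s. indicator I s * \<phi>' s * indicator {..y} s \<partial>lborel) = \<phi> y" for y
    proof -
      define c1 where "c1 = min c0 y - 1"
      have "(\<integral>s. indicator I s * \<phi>' s * indicator {..y} s \<partial>lborel) = (\<integral>s. indicator {c1..y} s *\<^sub>R \<phi>' s \<partial>lborel)"
      proof (rule Bochner_Integration.integral_cong[OF refl])
        fix s
        show "indicator I s * \<phi>' s * indicator {..y} s = indicator {c1..y} s *\<^sub>R \<phi>' s"
        proof (cases "s \<in> {c0..d0}")
          case True then show ?thesis using c0d0I[OF True] by (auto simp: indicator_def c1_def)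
        next
          case False then show ?thesis using z' by auto
        qed
      qed
      also have "\<dots> = \<phi> y - \<phi> c1"
      proof (rule integral_FTC_atLeastAtMost)
        show "c1 \<le> y" unfolding c1_def by simp
        show "(\<phi> has_vector_derivative \<phi>' x) (at x within {c1..y})" for x
          using der[of x] by (simp add: has_real_derivative_iff_has_vector_derivative has_vector_derivative_at_within)
        show "continuous_on {c1..y} \<phi>'" using continuous_on_subset[OF cont] by auto
      qed
      also have "c1 < c0" unfolding c1_def by (simp add: min_def)
      then have "\<phi> c1 = 0" using z[of c1] by auto
      finally show ?thesis by simp
    qed
    have "(LINT x:I|lborel. - V x * \<phi>' x) = - (\<integral>s. (\<integral>y. F s y \<partial>lborel) \<partial>lborel)"
    proof -
      have Fs: "(\<integral>y. F s y \<partial>lborel) = (indicator I s * \<phi>' s) * V s" for s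
        unfolding V_def by (rule int_cmult_eq) (simp add: F_def)
      show ?thesis unfolding set_lebesgue_integral_def Fs by (simp add: ac_simps)
    qed
    also have "(\<integral>s. (\<integral>y. F s y \<partial>lborel) \<partial>lborel) = (\<integral>y. (\<integral>s. F s y \<partial>lborel) \<partial>lborel)"
      using lborel_pair.Fubini_integral[OF Fint] by simp
    also have "\<dots> = (\<integral>y. indicator I y *\<^sub>R (v y * \<phi> y) \<partial>lborel)"
    proof (rule Bochner_Integration.integral_cong[OF refl])
      fix y
      have "(\<integral>s. F s y \<partial>lborel) = v y * (\<integral>s. indicator I s * \<phi>' s * indicator {..y} s \<partial>lborel)"
        by (rule int_cmult_eq) (simp add: F_def indicator_def)
      also have "\<dots> = indicator I y *\<^sub>R (v y * \<phi> y)" using inner vI[of y] by (cases "v y = 0") auto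
      finally show "(\<integral>s. F s y \<partial>lborel) = indicator I y *\<^sub>R (v y * \<phi> y)" .
    qed
    finally show "(LINT x:I|lborel. - V x * \<phi>' x) = - (LINT x:I|lborel. v x * \<phi> x)"
      unfolding set_lebesgue_integral_def .
  qed
qed

end

context S begin

lemma key_compact:
  fixes u :: "real \<Rightarrow> real" and c d C0 :: real
  assumes pc: "poincare_const a b p w C0" and h2: "H2 a b p w"
    and uL: "L2pw a b p w u" and unn: "\<And>y. u y \<ge> 0" and c: "c \<in> I" and d: "d \<in> I"
  defines "v \<equiv> (\<lambda>y. indicator {c..d} y * u y)"
  shows "integrable (lborel \<Otimes>\<^sub>M lborel) (\<lambda>(y,z). indicator I y * indicator I z * Kker a p y z * v y * v z)"
    and "integral\<^sup>L (lborel \<Otimes>\<^sub>M lborel) (\<lambda>(y,z). indicator I y * indicator I z * Kker a p y z * v y * v z)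
          \<le> max C0 0 * (LINT y:I|lborel. (u y)\<^sup>2 * p y * w y)"
proof -
  have um[measurable]: "u \<in> borel_measurable borel" using L2pw_meas[OF uL] .
  have vint: "integrable lborel v"
    using h2 uL c d unfolding H2_def locint_def set_integrable_def v_def by auto
  have vnn: "\<And>y. v y \<ge> 0" unfolding v_def using unn by simp
  have vsupp: "\<And>y. y \<notin> {c..d} \<Longrightarrow> v y = 0" unfolding v_def by simp
  define V where "V = (\<lambda>s. \<integral>y. indicator {s..} y * v y \<partial>lborel)"
  show Gint: "integrable (lborel \<Otimes>\<^sub>M lborel) (\<lambda>(y,z). indicator I y * indicator I z * Kker a p y z * v y * v z)"
    using var_formula(1)[OF vint vnn vsupp c d] .
  have var: "var_p a b p (\<lambda>s. - V s) = integral\<^sup>L (lborel \<Otimes>\<^sub>M lborel) (\<lambda>(y,z). indicator I y * indicator I z * Kker a p y z * v y * v z)"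
    using var_formula(2)[OF vint vnn vsupp c d] unfolding V_def .
  have wd: "weak_deriv a b (\<lambda>s. - V s) v" and l2p: "L2p a b p (\<lambda>s. - V s)"
    using weak_deriv_V[OF vint vnn vsupp c d] unfolding V_def by auto
  have iu: "integrable lborel (\<lambda>y. indicator I y * ((u y)\<^sup>2 * p y * w y))" using L2pw_int[OF uL] .
  have eqv: "indicator I y * ((v y)\<^sup>2 * p y * w y) = indicator {c..d} y *\<^sub>R (indicator I y * ((u y)\<^sup>2 * p y * w y))" for y
    unfolding v_def by (simp add: indicator_def)
  have iv: "integrable lborel (\<lambda>y. indicator I y * ((v y)\<^sup>2 * p y * w y))"
    unfolding eqv using integrable_mult_indicator[OF _ iu] by simp
  have vL: "L2pw a b p w v" unfolding L2pw_def set_integrable_def using iv vint by auto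
  have pcv: "var_p a b p (\<lambda>s. - V s) \<le> C0 * (LINT y:I|lborel. (v y)\<^sup>2 * p y * w y)"
    using pc wd l2p vL unfolding poincare_const_def by blast
  have X0: "0 \<le> (LINT y:I|lborel. (v y)\<^sup>2 * p y * w y)"
    using ipw_self_nn[of v] unfolding ipw_def by (simp add: power2_eq_square)
  have XU: "(LINT y:I|lborel. (v y)\<^sup>2 * p y * w y) \<le> (LINT y:I|lborel. (u y)\<^sup>2 * p y * w y)"
    unfolding set_lebesgue_integral_def
  proof (simp only: real_scaleR_def, rule integral_mono_AE[OF iv iu])
    show "AE y in lborel. indicator I y * ((v y)\<^sup>2 * p y * w y) \<le> indicator I y * ((u y)\<^sup>2 * p y * w y)"
      using pw_nn
    proof eventually_elim
      case (elim y)
      show ?case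
      proof (cases "y \<in> I")
        case True
        then have q: "0 \<le> p y * w y" using elim by auto
        have "(v y)\<^sup>2 \<le> (u y)\<^sup>2" unfolding v_def by (simp add: indicator_def)
        then have "(v y)\<^sup>2 * (p y * w y) \<le> (u y)\<^sup>2 * (p y * w y)" using q by (rule mult_right_mono)
        then show ?thesis using True by (simp add: mult.assoc)
      qed simp
    qed
  qed
  have "C0 * (LINT y:I|lborel. (v y)\<^sup>2 * p y * w y) \<le> max C0 0 * (LINT y:I|lborel. (v y)\<^sup>2 * p y * w y)"
    using X0 by (intro mult_right_mono) auto
  also have "\<dots> \<le> max C0 0 * (LINT y:I|lborel. (u y)\<^sup>2 * p y * w y)"
    using XU by (intro mult_left_mono) auto
  finally show "integral\<^sup>L (lborel \<Otimes>\<^sub>M lborel) (\<lambda>(y,z). indicator I y * indicator I z * Kker a p y z * v y * v z)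
          \<le> max C0 0 * (LINT y:I|lborel. (u y)\<^sup>2 * p y * w y)"
    using pcv var by simp
qed

lemma key:
  fixes u :: "real \<Rightarrow> real"
  assumes h1: "H1 a b p w" and h2: "H2 a b p w"
    and uL: "L2pw a b p w u" and unn: "\<forall>y. u y \<ge> 0"
  shows "integrable (lborel \<Otimes>\<^sub>M lborel) (\<lambda>(y,z). indicator I y * indicator I z * Kker a p y z * u y * u z)"
proof -
  obtain C0 where pc: "poincare_const a b p w C0" using h1 unfolding H1_def by auto
  have um[measurable]: "u \<in> borel_measurable borel" "u \<in> borel_measurable lborel" using L2pw_meas[OF uL] by auto
  have "\<exists>r l :: nat \<Rightarrow> real. I = (\<Union>i. {l i .. r i}) \<and> incseq r \<and> decseq l \<and>
      (\<forall>i. l i < r i) \<and> (\<forall>i. a < l i) \<and> (\<forall>i. r i < b)"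
    by (rule einterval_Icc_approximation[OF ab]) blast
  then obtain r l :: "nat \<Rightarrow> real" where appr: "I = (\<Union>i. {l i .. r i})"
    "incseq r" "decseq l" "\<And>i. l i < r i" "\<And>i. a < l i" "\<And>i. r i < b"
    by blast
  have lr: "ereal (l i) < ereal (r i)" for i using appr(4)[of i] by simp
  have lI: "l i \<in> I" for i
  proof -
    have "ereal (l i) < b" using lr[of i] appr(6)[of i] by (rule less_trans)
    then show ?thesis using appr(5)[of i] by (simp add: einterval_def)
  qed
  have rI: "r i \<in> I" for i
  proof -
    have "a < ereal (r i)" using appr(5)[of i] lr[of i] by (rule less_trans)
    then show ?thesis using appr(6)[of i] by (simp add: einterval_def)
  qed
  have unn': "\<And>y. 0 \<le> u y" using unn by auto
  define J where "J i = {l i .. r i}" for i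
  have Jmono: "J i \<subseteq> J j" if ij: "i \<le> j" for i j
  proof -
    have "l j \<le> l i" using appr(3) ij unfolding decseq_def by blast
    moreover have "r i \<le> r j" using appr(2) ij unfolding incseq_def by blast
    ultimately show ?thesis unfolding J_def by auto
  qed
  define f where "f i yz = (case yz of (y,z) \<Rightarrow> indicator I y * indicator I z * Kker a p y z
      * (indicator (J i) y * u y) * (indicator (J i) z * u z))" for i yz
  define G where "G yz = (case yz of (y,z) \<Rightarrow> indicator I y * indicator I z * Kker a p y z * u y * u z)" for yz
  define U2 where "U2 = (LINT y:I|lborel. (u y)\<^sup>2 * p y * w y)"
  have fint: "integrable (lborel \<Otimes>\<^sub>M lborel) (f i)" for i
    using key_compact(1)[OF pc h2 uL unn' lI[of i] rI[of i]] unfolding f_def J_def by (simp add: case_prod_beta')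
  have fbd: "integral\<^sup>L (lborel \<Otimes>\<^sub>M lborel) (f i) \<le> max C0 0 * U2" for i
    using key_compact(2)[OF pc h2 uL unn' lI[of i] rI[of i]] unfolding f_def J_def U2_def by (simp add: case_prod_beta')
  have fnn: "0 \<le> f i yz" for i yz
  proof (cases yz)
    case (Pair y z)
    then show ?thesis using K_nn[of y z] unn unfolding f_def by (auto simp: indicator_def)
  qed
  have fmono: "f i yz \<le> f j yz" if "i \<le> j" for i j yz
  proof (cases yz)
    case (Pair y z)
    show ?thesis
    proof (cases "y \<in> I \<and> z \<in> I")
      case True
      have ij: "indicator (J i) t \<le> (indicator (J j) t :: real)" for t
        using Jmono[OF that] by (auto simp: indicator_def)
      have k: "Kker a p y z \<ge> 0" using K_nn True by auto
      have A: "indicator (J i) y * u y \<le> indicator (J j) y * u y" using ij[of y] unn by (simp add: mult_right_mono)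
      have B: "indicator (J i) z * u z \<le> indicator (J j) z * u z" using ij[of z] unn by (simp add: mult_right_mono)
      have "(indicator (J i) y * u y) * (indicator (J i) z * u z) \<le> (indicator (J j) y * u y) * (indicator (J j) z * u z)"
        by (rule mult_mono[OF A B]) (use unn in auto)
      then have "Kker a p y z * ((indicator (J i) y * u y) * (indicator (J i) z * u z))
          \<le> Kker a p y z * ((indicator (J j) y * u y) * (indicator (J j) z * u z))"
        using k by (rule mult_left_mono)
      then show ?thesis using True Pair unfolding f_def by (simp add: mult.assoc)
    qed (auto simp: Pair f_def)
  qed
  have flim: "(\<lambda>i. f i yz) \<longlonglongrightarrow> G yz" for yz
  proof (cases yz)
    case (Pair y z)
    show ?thesis
    proof (cases "y \<in> I \<and> z \<in> I")
      case True
      obtain i where i: "y \<in> J i" using True appr(1) unfolding J_def by auto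
      obtain j where j: "z \<in> J j" using True appr(1) unfolding J_def by auto
      have "\<forall>\<^sub>F k in sequentially. f k yz = G yz"
      proof (rule eventually_sequentiallyI[of "max i j"])
        fix k assume "max i j \<le> k"
        then have "y \<in> J k" "z \<in> J k" using Jmono[of i k] Jmono[of j k] i j by auto
        then show "f k yz = G yz" unfolding f_def G_def Pair by simp
      qed
      then show ?thesis by (rule tendsto_eventually)
    next
      case False
      then have "f k yz = 0" "G yz = 0" for k unfolding f_def G_def Pair by auto
      then show ?thesis by simp
    qed
  qed
  have Gm: "G \<in> borel_measurable (lborel \<Otimes>\<^sub>M lborel)" unfolding G_def by measurable
  have inc: "incseq (\<lambda>i. integral\<^sup>L (lborel \<Otimes>\<^sub>M lborel) (f i))"
    unfolding incseq_def using fint fmono by (intro allI impI integral_mono) auto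
  have conv: "(\<lambda>i. integral\<^sup>L (lborel \<Otimes>\<^sub>M lborel) (f i)) \<longlonglongrightarrow> (SUP i. integral\<^sup>L (lborel \<Otimes>\<^sub>M lborel) (f i))"
    using fbd by (intro LIMSEQ_incseq_SUP inc) (auto intro!: bdd_aboveI2)
  have "integrable (lborel \<Otimes>\<^sub>M lborel) G"
  proof (rule integral_monotone_convergence_nonneg(1)[OF fint _ _ _ conv Gm])
    show "AE x in lborel \<Otimes>\<^sub>M lborel. mono (\<lambda>n. f n x)" using fmono by (auto simp: mono_def)
    show "\<And>i. AE x in lborel \<Otimes>\<^sub>M lborel. 0 \<le> f i x" using fnn by auto
    show "AE x in lborel \<Otimes>\<^sub>M lborel. (\<lambda>i. f i x) \<longlonglongrightarrow> G x" using flim by auto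
  qed
  then show ?thesis unfolding G_def by (simp add: case_prod_beta')
qed

end

theorem proposition3p9:
  fixes a b :: ereal and p w :: "real \<Rightarrow> real"
    and \<kappa> :: "nat \<Rightarrow> real" and e :: "nat \<Rightarrow> real \<Rightarrow> real"
    and x :: real and g0 :: "real \<Rightarrow> real" and n :: nat
  assumes dens: "is_prob_density a b p"
    and weight: "is_weight a b p w"
    and h1: "H1 a b p w" and h2: "H2 a b p w"
    and cpt: "Lt_compact a b p w"
    and eig: "eigensystem a b p w \<kappa> e"
    and xI: "x \<in> einterval a b"
    and kx: "L2pw a b p w (kw a p w x)"
    and g0: "E2 a b p w g0"
    and a1: "ipw a b p w g0 (e 1) \<noteq> 0"
    and n: "n \<ge> 1"
    and Bn: "normpw a b p w (kw a p w x)
               * normpw a b p w (\<lambda>y. g0 y - ipw a b p w g0 (e 1) * e 1 y)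
               * (\<kappa> 2 / Cpw a b p w) ^ (n - 1)
             < Cpw a b p w * \<bar>ipw a b p w g0 (e 1) * e 1 x\<bar>"
  shows "(let B = normpw a b p w (kw a p w x)
               * normpw a b p w (\<lambda>y. g0 y - ipw a b p w g0 (e 1) * e 1 y)
               * (\<kappa> 2 / Cpw a b p w) ^ (n - 1)
          in \<bar>(Lt a b p w ^^ (n + 1)) g0 x / (Lt a b p w ^^ n) g0 x - Cpw a b p w\<bar>
             \<le> (if B = 0 then 0
                 else 2 * inverse (\<bar>ipw a b p w g0 (e 1) * e 1 x\<bar> / B - 1 / Cpw a b p w)))"
proof -
  interpret S a b p w using dens weight by unfold_locales
  show ?thesis by (rule main_with_key[OF key[OF h1 h2] cpt eig xI kx g0 n Bn])
qed

end
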